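(* If $(\alpha,\beta)$ is a Bailey pair relative to $(a,q)$, then \begin{align*} &\sum_{n=0}^\infty(\sqrt a;q)_n(-1)^na^{n/2}q^{\frac{n(n+1)}2}\beta_n=\frac{(\sqrt aq;q)_\infty}{(aq;q)_\infty}\sum_{n=0}^\infty\frac{(1-\sqrt a)(-1)^na^{n/2}q^{\frac{n(n+1)}2}\alpha_n}{1-\sqrt aq^n},\\ &\sum_{n=0}^\infty(\sqrt{aq};q)_n(-1)^na^{n/2}q^{\frac{n^2}2}\beta_n=\frac{(\sqrt{aq};q)_\infty}{(aq;q)_\infty}\sum_{n=0}^\infty(-1)^na^{n/2}q^{\frac{n^2}2}\alpha_n,\\ &\sum_{n=0}^\infty(z\sqrt aq^{-1/2},z^{-1}\sqrt aq^{-1/2};q)_nq^n\beta_n\\ &\quad=\frac{(z\sqrt aq^{-1/2},z^{-1}\sqrt aq^{-1/2};q)_\infty}{(q,aq;q)_\infty}\sum_{n=0}^\infty\frac{(1-(z+z^{-1})\sqrt aq^{n+1/2}+aq^{2n})q^n\alpha_n}{(1-z\sqrt aq^{n-1/2})(1-z\sqrt aq^{n+1/2})(1-z^{-1}\sqrt aq^{n-1/2})(1-z^{-1}\sqrt aq^{n+1/2})},\\ &\sum_{n=0}^\infty(z\sqrt aq^{-1/2},z^{-1}\sqrt aq^{-1/2};q)_nq^{2n}\beta_n\\ &\quad=\frac{(z\sqrt aq^{-1/2},z^{-1}\sqrt aq^{-1/2};q)_\infty}{(q,aq;q)_\infty}\sum_{n=0}^\infty\frac{(1-q)q^{2n}\alpha_n}{(1-z\sqrt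 aq^{n-1/2})(1-z\sqrt aq^{n+1/2})(1-z^{-1}\sqrt aq^{n-1/2})(1-z^{-1}\sqrt aq^{n+1/2})},\\ &\sum_{n=0}^\infty\frac{(a^{3/2}q^{-3/2};q^3)_nq^n\beta_n}{(\sqrt aq^{-1/2};q)_n}=\frac{(a^{3/2}q^{-3/2};q^3)_\infty}{(q,aq,\sqrt aq^{-1/2};q)_\infty}\sum_{n=0}^\infty\frac{(1-\sqrt aq^{n-1/2})(1-\sqrt aq^{n+1/2})(1+\sqrt aq^{n+1/2}+aq^{2n})q^n\alpha_n}{(1-a^{3/2}q^{3n-3/2})(1-a^{3/2}q^{3n+3/2})},\\ &\sum_{n=0}^\infty\frac{(a^{3/2}q^{-3/2};q^3)_nq^{2n}\beta_n}{(\sqrt aq^{-1/2};q)_n}=\frac{(a^{3/2}q^{-3/2};q^3)_\infty}{(q,aq,\sqrt aq^{-1/2};q)_\infty}\sum_{n=0}^\infty\frac{(1-q)(1-\sqrt aq^{n-1/2})(1-\sqrt aq^{n+1/2})q^{2n}\alpha_n}{(1-a^{3/2}q^{3n-3/2})(1-a^{3/2}q^{3n+3/2})}. \end{align*} If $(\alpha,\beta)$ is a Bailey pair relative to $(a,q^2)$, then \begin{align*} \sum_{n=0}^\infty(-\sqrt a;q)_{2n}q^n\beta_n=\frac{(-\sqrt aq;q)_\infty}{(aq^2,q;q^2)_\infty}\sum_{n=0}^\infty\frac{(1+\sqrt a)q^n\alpha_n}{1+\sqrt aq^{2n}}. \end{align*}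
   Context: Notation: $(z;q)_n=\prod_{j=0}^{n-1}(1-zq^j)$, $(z;q)_\infty=\prod_{j\ge0}(1-zq^j)$, $(z_1,\dots,z_k;q)_n=(z_1;q)_n\cdots(z_k;q)_n$ (also for $n=\infty$); $|q|<1$, and all series are assumed convergent. A pair of sequences $(\alpha_n)_{n\ge0},(\beta_n)_{n\ge0}$ is a Bailey pair relative to $(a,q)$ if $\beta_n=\sum_{k=0}^n\frac{\alpha_k}{(q;q)_{n-k}(aq;q)_{n+k}}$ for all $n\ge0$. *)

theory Defs
  imports "HOL-Analysis.Analysis"
begin

definition qpoch :: "complex \<Rightarrow> complex \<Rightarrow> nat \<Rightarrow> complex" where
  "qpoch z q n = (\<Prod>j<n. 1 - z * q ^ j)"

definition qpoch_inf :: "complex \<Rightarrow> complex \<Rightarrow> complex" where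
  "qpoch_inf z q = prodinf (\<lambda>j. 1 - z * q ^ j)"

definition bailey_pair :: "(nat \<Rightarrow> complex) \<Rightarrow> (nat \<Rightarrow> complex) \<Rightarrow> complex \<Rightarrow> complex \<Rightarrow> bool" where
  "bailey_pair \<alpha> \<beta> a q \<longleftrightarrow>
     (\<forall>n. \<beta> n = (\<Sum>k\<le>n. \<alpha> k / (qpoch q q (n - k) * qpoch (a * q) q (n + k))))"

end

theory Submission
  imports Defs
begin


lemma qpoch_0[simp]: "qpoch z q 0 = 1" by (simp add: qpoch_def)

lemma qpoch_Suc: "qpoch z q (Suc n) = qpoch z q n * (1 - z * q ^ n)"
  by (simp add: qpoch_def)

lemma qpoch_Suc': "qpoch z q (Suc n) = (1 - z) * qpoch (z * q) q n"
  unfolding qpoch_def by (subst prod.lessThan_Suc_shift) (simp add: mult.assoc)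

lemma qpoch_add: "qpoch z q (m + n) = qpoch z q m * qpoch (z * q ^ m) q n"
  by (induction n) (simp_all add: qpoch_Suc power_add mult.assoc mult_ac)

lemma qpoch_lim:
  assumes "norm q < 1"
  shows "(\<lambda>n. qpoch z q n) \<longlonglongrightarrow> qpoch_inf z q"
proof -
  have s: "summable (\<lambda>i. norm ((1 - z * q ^ i) - 1))"
    using assms by (simp add: norm_mult norm_power summable_mult summable_geometric)
  have cp: "convergent_prod (\<lambda>i. 1 - z * q ^ i)"
    by (rule abs_convergent_prod_imp_convergent_prod[OF summable_imp_abs_convergent_prod[OF s]])
  have "(\<lambda>n. \<Prod>i\<le>n. 1 - z * q ^ i) \<longlonglongrightarrow> qpoch_inf z q"
    unfolding qpoch_inf_def by (rule convergent_prod_LIMSEQ[OF cp])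
  then have "(\<lambda>n. qpoch z q (Suc n)) \<longlonglongrightarrow> qpoch_inf z q"
    by (simp add: qpoch_def lessThan_Suc_atMost)
  then show ?thesis by (rule LIMSEQ_imp_Suc)
qed

lemma qpoch_inf_nonzero:
  assumes "norm q < 1" "\<And>j. 1 - z * q ^ j \<noteq> 0"
  shows "qpoch_inf z q \<noteq> 0"
proof -
  have s: "summable (\<lambda>i. norm ((1 - z * q ^ i) - 1))"
    using assms by (simp add: norm_mult norm_power summable_mult summable_geometric)
  have cp: "convergent_prod (\<lambda>i. 1 - z * q ^ i)"
    by (rule abs_convergent_prod_imp_convergent_prod[OF summable_imp_abs_convergent_prod[OF s]])
  show ?thesis unfolding qpoch_inf_def by (rule prodinf_nonzero[OF cp assms(2)])
qed

lemma qpoch_inf_split: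
  assumes "norm q < 1"
  shows "qpoch_inf z q = qpoch z q m * qpoch_inf (z * q ^ m) q"
proof -
  have "(\<lambda>n. qpoch z q (m + n)) \<longlonglongrightarrow> qpoch_inf z q"
    using LIMSEQ_ignore_initial_segment[OF qpoch_lim[OF assms], of z m] by (simp add: add.commute)
  moreover have "(\<lambda>n. qpoch z q (m + n)) \<longlonglongrightarrow> qpoch z q m * qpoch_inf (z * q ^ m) q"
    unfolding qpoch_add by (intro tendsto_mult tendsto_const qpoch_lim assms)
  ultimately show ?thesis using LIMSEQ_unique by blast
qed

lemma qpoch_inf_shift:
  assumes "norm q < 1"
  shows "qpoch_inf z q = (1 - z) * qpoch_inf (z * q) q"
  using qpoch_inf_split[OF assms, of z 1] by (simp add: qpoch_def)

lemma qpoch_nonzero: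
  assumes "\<And>j. 1 - z * q ^ j \<noteq> 0" shows "qpoch z q n \<noteq> 0"
  using assms by (simp add: qpoch_def)

lemma qpoch_ratio: "qpoch z q k * (1 - z * q ^ k) = (1 - z) * qpoch (z * q) q k"
  using qpoch_Suc[of z q k] qpoch_Suc'[of z q k] by simp

lemma norm_qpoch_le:
  assumes "norm q < 1"
  shows "norm (qpoch z q n) \<le> exp (norm z / (1 - norm q))"
proof -
  have "norm (qpoch z q n) \<le> (\<Prod>j<n. exp (norm z * norm q ^ j))"
    unfolding qpoch_def prod_norm[symmetric]
  proof (rule prod_mono, safe)
    fix j
    have "norm (1 - z * q ^ j) \<le> 1 + norm z * norm q ^ j"
      using norm_triangle_ineq4[of 1 "z * q ^ j"] by (simp add: norm_mult norm_power)
    also have "\<dots> \<le> exp (norm z * norm q ^ j)" by (rule exp_ge_add_one_self)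
    finally show "norm (1 - z * q ^ j) \<le> exp (norm z * norm q ^ j)" .
  qed simp
  also have "\<dots> = exp (\<Sum>j<n. norm z * norm q ^ j)" by (simp add: exp_sum)
  also have "(\<Sum>j<n. norm z * norm q ^ j) \<le> norm z / (1 - norm q)"
  proof -
    have "(\<Sum>j<n. norm q ^ j) \<le> (\<Sum>j. norm q ^ j)"
      using assms by (intro sum_le_suminf summable_geometric) auto
    also have "\<dots> = 1 / (1 - norm q)" using assms by (simp add: suminf_geometric)
    finally show ?thesis
      by (simp add: sum_distrib_left[symmetric] mult_left_mono divide_inverse)
  qed
  then have "exp (\<Sum>j<n. norm z * norm q ^ j) \<le> exp (norm z / (1 - norm q))" by simp
  finally show ?thesis .
qed

lemma lim_lower_bound:
  fixes X :: "nat \<Rightarrow> complex"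
  assumes "X \<longlonglongrightarrow> L" "L \<noteq> 0" "\<And>n. X n \<noteq> 0"
  shows "\<exists>c>0. \<forall>n. c \<le> norm (X n)"
proof -
  have "eventually (\<lambda>n. dist (X n) L < norm L / 2) sequentially"
    using assms(1) by (rule tendstoD) (use assms(2) in simp)
  then obtain N where N: "\<And>n. n \<ge> N \<Longrightarrow> norm (X n - L) < norm L / 2"
    by (auto simp: eventually_sequentially dist_norm)
  define c where "c = min (norm L / 2) (Min (insert 1 (norm ` X ` {..<N})))"
  have "c > 0" unfolding c_def using assms(2,3) by (auto)
  moreover have "c \<le> norm (X n)" for n
  proof (cases "n \<ge> N")
    case True
    with N have "norm (L - X n) < norm L / 2" by (simp add: norm_minus_commute)
    then have "norm L / 2 \<le> norm (X n)"
      using norm_triangle_ineq2[of L "X n"] by linarith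
    then show ?thesis unfolding c_def by linarith
  next
    case False
    then have "Min (insert 1 (norm ` X ` {..<N})) \<le> norm (X n)" by (intro Min_le) auto
    then show ?thesis unfolding c_def by linarith
  qed
  ultimately show ?thesis by blast
qed

lemma qpoch_lower_bound:
  assumes "norm q < 1" "\<And>j. 1 - z * q ^ j \<noteq> 0"
  shows "\<exists>c>0. \<forall>n. c \<le> norm (qpoch z q n)"
  by (rule lim_lower_bound[OF qpoch_lim[OF assms(1)] qpoch_inf_nonzero[OF assms] qpoch_nonzero[OF assms(2)]])


definition qP :: "complex \<Rightarrow> complex \<Rightarrow> complex \<Rightarrow> nat \<Rightarrow> complex" where
  "qP x y q n = (\<Prod>j<n. x - y * q ^ j)"

lemma qP_0[simp]: "qP x y q 0 = 1" by (simp add: qP_def)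
lemma qP_Suc: "qP x y q (Suc n) = qP x y q n * (x - y * q ^ n)" by (simp add: qP_def)
lemma qP_Suc': "qP x y q (Suc n) = (x - y) * qP x (y * q) q n"
  unfolding qP_def by (subst prod.lessThan_Suc_shift) (simp add: mult.assoc)
lemma qP_add: "qP x y q (m + n) = qP x y q m * qP x (y * q ^ m) q n"
  by (induction n) (simp_all add: qP_Suc power_add mult.assoc mult_ac)
lemma qP_zero_y[simp]: "qP x 0 q n = x ^ n"
  by (simp add: qP_def)

lemma norm_lt1_ne: "norm (w::complex) < 1 \<Longrightarrow> 1 - w \<noteq> 0"
  by auto

lemma qq_nonzero: "norm (q::complex) < 1 \<Longrightarrow> 1 - q * q ^ j \<noteq> 0"
proof -
  assume "norm q < 1"
  then have "norm q ^ Suc j < 1"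
    using power_less_one_iff[of "norm q" "Suc j"] by simp
  then have "norm (q * q ^ j) < 1"
    by (simp add: norm_mult norm_power)
  then show ?thesis by (rule norm_lt1_ne)
qed

lemma x_nonzero: "norm (q::complex) < 1 \<Longrightarrow> norm x < 1 \<Longrightarrow> 1 - x * q ^ j \<noteq> 0"
proof -
  assume a: "norm q < 1" "norm x < 1"
  have "norm (q ^ j) \<le> 1" using a by (simp add: norm_power power_le_one)
  then have "norm x * norm (q ^ j) \<le> norm x"
    by (simp add: mult_left_le)
  then have "norm (x * q ^ j) < 1" using a
    by (simp add: norm_mult)
  then show ?thesis by (rule norm_lt1_ne)
qed

lemma prod_geom_bound_aux:
  fixes f :: "nat \<Rightarrow> real"
  assumes "\<And>j. 0 \<le> f j" "\<And>j. f j \<le> M * \<theta>" "\<And>j. j \<ge> J \<Longrightarrow> f j \<le> \<theta>" "0 < \<theta>" "1 \<le> M"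
  shows "(\<Prod>j<m. f j) \<le> M ^ (min m J) * \<theta> ^ m"
proof (induction m)
  case (Suc m)
  have "(\<Prod>j<Suc m. f j) = (\<Prod>j<m. f j) * f m" by simp
  also have "\<dots> \<le> (M ^ (min m J) * \<theta> ^ m) * f m"
    using Suc assms(1) by (intro mult_right_mono) auto
  also have "\<dots> \<le> M ^ (min (Suc m) J) * \<theta> ^ Suc m"
  proof (cases "m \<ge> J")
    case True
    then have "min (Suc m) J = min m J" by simp
    then show ?thesis using assms(3)[OF True] assms(4,5)
      by (simp add: mult_left_mono)
  next
    case False
    then have "min (Suc m) J = Suc (min m J)" by simp
    moreover have "(M ^ (min m J) * \<theta> ^ m) * f m \<le> (M ^ (min m J) * \<theta> ^ m) * (M * \<theta>)"
      using assms by (intro mult_left_mono) auto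
    ultimately show ?thesis by (simp add: mult_ac)
  qed
  finally show ?case .
qed simp

lemma prod_geom_bound:
  fixes f :: "nat \<Rightarrow> real"
  assumes "\<And>j. 0 \<le> f j" "\<And>j. f j \<le> M * \<theta>" "\<And>j. j \<ge> J \<Longrightarrow> f j \<le> \<theta>" "0 < \<theta>" "1 \<le> M"
  shows "(\<Prod>j<m. f j) \<le> M ^ J * \<theta> ^ m"
proof -
  have "(\<Prod>j<m. f j) \<le> M ^ (min m J) * \<theta> ^ m" by (rule prod_geom_bound_aux[OF assms])
  also have "\<dots> \<le> M ^ J * \<theta> ^ m"
    using assms by (intro mult_right_mono power_increasing) auto
  finally show ?thesis .
qed

lemma qP_bound:
  assumes q: "norm q < 1" and x: "norm x < 1"
  shows "\<exists>K \<theta>. 0 < \<theta> \<and> \<theta> < 1 \<and> 0 \<le> K \<and> (\<forall>m y'. norm y' \<le> R \<longrightarrow> norm (qP x y' q m) \<le> K * \<theta> ^ m)"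
proof -
  define \<theta> where "\<theta> = (1 + norm x) / 2"
  have th: "0 < \<theta>" "\<theta> < 1" using x unfolding \<theta>_def by (auto simp: add_pos_nonneg)
  have "(\<lambda>j. \<bar>R\<bar> * norm q ^ j) \<longlonglongrightarrow> \<bar>R\<bar> * 0"
    using q by (intro tendsto_mult tendsto_const LIMSEQ_power_zero) auto
  then have "eventually (\<lambda>j. dist (\<bar>R\<bar> * norm q ^ j) 0 < (1 - norm x) / 2) sequentially"
    using x by (intro tendstoD) auto
  then obtain J where J: "\<And>j. j \<ge> J \<Longrightarrow> \<bar>R\<bar> * norm q ^ j < (1 - norm x) / 2"
    by (auto simp: eventually_sequentially dist_norm)
  define M where "M = max 1 ((norm x + \<bar>R\<bar>) / \<theta>)"
  have M1: "1 \<le> M" unfolding M_def by simp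
  have "norm (qP x y' q m) \<le> M ^ J * \<theta> ^ m" if "norm y' \<le> R" for m y'
  proof -
    define f where "f j = norm x + \<bar>R\<bar> * norm q ^ j" for j
    have "norm (qP x y' q m) = (\<Prod>j<m. norm (x - y' * q ^ j))"
      unfolding qP_def by (simp add: prod_norm)
    also have "\<dots> \<le> (\<Prod>j<m. f j)"
    proof (rule prod_mono, safe)
      fix j
      have "norm (x - y' * q ^ j) \<le> norm x + norm y' * norm q ^ j"
        using norm_triangle_ineq4[of x "y' * q ^ j"] by (simp add: norm_mult norm_power)
      also have "\<dots> \<le> f j" unfolding f_def using that
        by (intro add_left_mono mult_right_mono) auto
      finally show "norm (x - y' * q ^ j) \<le> f j" .
    qed simp
    also have "\<dots> \<le> M ^ J * \<theta> ^ m"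
    proof (rule prod_geom_bound[OF _ _ _ th(1) M1])
      fix j
      show "0 \<le> f j" unfolding f_def by simp
      have "norm q ^ j \<le> 1" using q by (simp add: power_le_one)
      then have "f j \<le> norm x + \<bar>R\<bar>" unfolding f_def
        by (simp add: mult_left_le)
      also have "\<dots> \<le> M * \<theta>" unfolding M_def using th
        by (simp add: divide_le_eq max_def)
      finally show "f j \<le> M * \<theta>" .
      assume "j \<ge> J"
      then show "f j \<le> \<theta>" using J[of j] unfolding f_def \<theta>_def by simp
    qed
    finally show ?thesis .
  qed
  then show ?thesis using th M1 by (intro exI[of _ "M ^ J"] exI[of _ \<theta>]) auto
qed


lemma norm_mult_q_lt1: "norm (q::complex) < 1 \<Longrightarrow> norm w < 1 \<Longrightarrow> norm (w * q ^ n) \<le> norm w"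
proof -
  assume "norm q < 1" "norm w < 1"
  then have "norm q ^ n \<le> 1" by (simp add: power_le_one)
  then show ?thesis by (simp add: norm_mult norm_power mult_left_le)
qed

lemma qbinomial:
  assumes q: "norm q < 1" and x: "norm x < 1"
  shows "(\<lambda>m. qpoch \<rho> q m * x ^ m / qpoch q q m) sums (qpoch_inf (x * \<rho>) q / qpoch_inf x q)"
proof -
  obtain c where c: "c > 0" "\<And>n. c \<le> norm (qpoch q q n)"
    using qpoch_lower_bound[OF q qq_nonzero[OF q]] by blast
  define E where "E = exp (norm \<rho> / (1 - norm q))"
  have E: "norm (qpoch \<rho> q n) \<le> E" for n unfolding E_def by (rule norm_qpoch_le[OF q])
  have E0: "0 \<le> E" unfolding E_def by simp
  have qqnz: "qpoch q q n \<noteq> 0" for n using c(1) c(2)[of n] by auto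
  define b where "b w m = qpoch \<rho> q m * w ^ m / qpoch q q m" for w m
  have bnd: "norm (b w m) \<le> E / c * norm w ^ m" for w m
  proof -
    have "norm (b w m) = norm (qpoch \<rho> q m) * norm w ^ m / norm (qpoch q q m)"
      unfolding b_def by (simp add: norm_mult norm_divide norm_power)
    also have "\<dots> \<le> E * norm w ^ m / c"
      using E c E0 by (intro frac_le mult_right_mono mult_nonneg_nonneg) auto
    finally show ?thesis by simp
  qed
  have summ: "summable (b w)" if "norm w < 1" for w
    by (rule summable_comparison_test'[where g="\<lambda>m. E / c * norm w ^ m" and N=0])
      (use that bnd in \<open>auto intro!: summable_mult summable_geometric\<close>)
  define B where "B w = suminf (b w)" for w
  have b0: "b w 0 = 1" for w by (simp add: b_def)
  have termeq: "b w (Suc m) - b (w * q) (Suc m) = w * b w m - w * \<rho> * b (w * q) m" for w m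
  proof -
    have d: "1 - q * q ^ m \<noteq> 0" by (rule qq_nonzero[OF q])
    have "b w (Suc m) - b (w * q) (Suc m) = qpoch \<rho> q (Suc m) * (w ^ Suc m - (w * q) ^ Suc m) / qpoch q q (Suc m)"
      unfolding b_def by (simp add: diff_divide_distrib right_diff_distrib)
    also have "w ^ Suc m - (w * q) ^ Suc m = w ^ Suc m * (1 - q * q ^ m)"
      by (simp add: power_mult_distrib algebra_simps)
    also have "qpoch \<rho> q (Suc m) * (w ^ Suc m * (1 - q * q ^ m)) / qpoch q q (Suc m)
        = qpoch \<rho> q (Suc m) * w ^ Suc m / qpoch q q m"
      using d qqnz[of m] by (simp add: qpoch_Suc[of q q m])
    also have "\<dots> = w * b w m - w * \<rho> * b (w * q) m"
      unfolding b_def qpoch_Suc by (simp add: power_mult_distrib diff_divide_distrib algebra_simps)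
    finally show ?thesis .
  qed
  have funeq: "(1 - w) * B w = (1 - w * \<rho>) * B (w * q)" if w: "norm w < 1" for w
  proof -
    have "norm w * norm q \<le> norm w" using q by (simp add: mult_left_le less_imp_le)
    then have wq: "norm (w * q) < 1" using w by (simp add: norm_mult)
    have "B w - B (w * q) = (\<Sum>m. b w (Suc m)) - (\<Sum>m. b (w * q) (Suc m))"
      unfolding B_def using suminf_split_head[OF summ[OF w]] suminf_split_head[OF summ[OF wq]] b0 by simp
    also have "\<dots> = (\<Sum>m. b w (Suc m) - b (w * q) (Suc m))"
      using summable_Suc_iff[of "b w"] summable_Suc_iff[of "b (w*q)"] summ[OF w] summ[OF wq]
      by (intro suminf_diff) auto
    also have "\<dots> = (\<Sum>m. w * b w m - w * \<rho> * b (w * q) m)" by (simp add: termeq)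
    also have "\<dots> = w * B w - w * \<rho> * B (w * q)"
    proof -
      have s1: "summable (\<lambda>m. w * b w m)" by (rule summable_mult[OF summ[OF w]])
      have s2: "summable (\<lambda>m. w * \<rho> * b (w * q) m)" by (rule summable_mult[OF summ[OF wq]])
      show ?thesis unfolding B_def
        by (simp add: suminf_diff[OF s1 s2, symmetric] suminf_mult[OF summ[OF w]] suminf_mult[OF summ[OF wq]])
    qed
    finally show ?thesis by (simp add: algebra_simps)
  qed
  have xqn: "norm (x * q ^ n) < 1" for n using norm_mult_q_lt1[OF q x, of n] x by linarith
  have iter: "B x * qpoch x q N = qpoch (x * \<rho>) q N * B (x * q ^ N)" for N
  proof (induction N)
    case (Suc N)
    have "B x * qpoch x q (Suc N) = (B x * qpoch x q N) * (1 - x * q ^ N)"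
      by (simp add: qpoch_Suc)
    also have "\<dots> = qpoch (x * \<rho>) q N * ((1 - x * q ^ N) * B (x * q ^ N))"
      using Suc by simp
    also have "\<dots> = qpoch (x * \<rho>) q N * ((1 - x * q ^ N * \<rho>) * B (x * q ^ N * q))"
      using funeq[OF xqn[of N]] by simp
    also have "\<dots> = qpoch (x * \<rho>) q (Suc N) * B (x * q ^ Suc N)"
      by (simp add: qpoch_Suc mult_ac)
    finally show ?case .
  qed simp
  have lim1: "(\<lambda>N. B (x * q ^ N)) \<longlonglongrightarrow> 1"
  proof -
    have lim0: "(\<lambda>n. x * q ^ n) \<longlonglongrightarrow> 0"
      using q by (intro tendsto_mult_right_zero LIMSEQ_power_zero) auto
    have "(\<lambda>n. b (x * q ^ n) k) \<longlonglongrightarrow> b 0 k" for k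
      unfolding b_def using qqnz[of k] by (intro tendsto_intros lim0)
    moreover have "eventually (\<lambda>(k, n). norm (b (x * q ^ n) k) \<le> E / c * norm x ^ k) (at_top \<times>\<^sub>F sequentially)"
    proof (intro always_eventually allI, clarify)
      fix k n
      have "norm (b (x * q ^ n) k) \<le> E / c * norm (x * q ^ n) ^ k" by (rule bnd)
      also have "\<dots> \<le> E / c * norm x ^ k"
        using norm_mult_q_lt1[OF q x, of n] c E[of 0]
        by (intro mult_left_mono power_mono) auto
      finally show "norm (b (x * q ^ n) k) \<le> E / c * norm x ^ k" .
    qed
    moreover have "summable (\<lambda>k. E / c * norm x ^ k)"
      using x by (intro summable_mult summable_geometric) auto
    ultimately have "(\<lambda>n. suminf (\<lambda>k. b (x * q ^ n) k)) \<longlonglongrightarrow> suminf (b 0)"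
      using tannerys_theorem[of "\<lambda>k n. b (x * q ^ n) k" "b 0" sequentially] by auto
    moreover have "suminf (b 0) = 1"
    proof -
      have "b 0 = (\<lambda>k. if k = 0 then 1 else 0)" by (auto simp: b_def fun_eq_iff)
      then show ?thesis using sums_single[of 0 "\<lambda>_. 1::complex"] by (simp add: sums_iff)
    qed
    ultimately show ?thesis unfolding B_def by simp
  qed
  have "(\<lambda>N. B x * qpoch x q N) \<longlonglongrightarrow> B x * qpoch_inf x q"
    by (intro tendsto_intros qpoch_lim q)
  moreover have "(\<lambda>N. B x * qpoch x q N) \<longlonglongrightarrow> qpoch_inf (x * \<rho>) q * 1"
    unfolding iter by (intro tendsto_intros qpoch_lim q lim1)
  ultimately have "B x * qpoch_inf x q = qpoch_inf (x * \<rho>) q" using LIMSEQ_unique by fastforce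
  moreover have "qpoch_inf x q \<noteq> 0" by (rule qpoch_inf_nonzero[OF q x_nonzero[OF q x]])
  ultimately have "B x = qpoch_inf (x * \<rho>) q / qpoch_inf x q" by (simp add: field_simps)
  then show ?thesis using summ[OF x] unfolding B_def b_def by (simp add: sums_iff)
qed


lemma gauss_alg:
  fixes R P Q C x y \<rho> u v D1 D2 D3 :: complex
  assumes nz: "Q \<noteq> 0" "C \<noteq> 0" "D1 \<noteq> 0" "D2 \<noteq> 0" "D3 \<noteq> 0"
    and d: "D1 = 1 - v" "D2 = 1 - \<rho> * y * v" "D3 = 1 - \<rho> * y"
  shows "D3 * (R * (1 - \<rho> * u) * ((x - y) * P) / ((Q * D1) * (D3 * C)))
       - (1 - y) * (R * (1 - \<rho> * u) * (P * (x - y * v)) / ((Q * D1) * (C * D2)))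
     = y * (R * (1 - \<rho> * u) * (1 - \<rho> * v)) * (P * (x - y * v)) / ((Q * D1) * (C * D2))
       - y * (R * (1 - \<rho> * u)) * P / (Q * C)"
  apply (simp add: field_simps nz)
  apply (simp add: d algebra_simps)
  done

lemma norm_mult_qpow_le: "norm (q::complex) < 1 \<Longrightarrow> norm (w * q ^ n) \<le> norm w"
proof -
  assume "norm q < 1"
  then have "norm q ^ n \<le> 1" by (simp add: power_le_one)
  then show ?thesis by (simp add: norm_mult norm_power mult_left_le)
qed

lemma qpoch_shift_lower:
  assumes q: "norm q < 1" and nz: "\<And>j. 1 - z * q ^ j \<noteq> 0"
  shows "\<exists>c>0. \<forall>N m. c \<le> norm (qpoch (z * q ^ N) q m)"
proof -
  obtain c where c: "c > 0" "\<And>n. c \<le> norm (qpoch z q n)"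
    using qpoch_lower_bound[OF q nz] by blast
  define E where "E = exp (norm z / (1 - norm q))"
  have E: "norm (qpoch z q n) \<le> E" for n unfolding E_def by (rule norm_qpoch_le[OF q])
  have Epos: "E > 0" unfolding E_def by simp
  have "c / E \<le> norm (qpoch (z * q ^ N) q m)" for N m
  proof -
    have "norm (qpoch z q (N + m)) = norm (qpoch z q N) * norm (qpoch (z * q ^ N) q m)"
      by (simp add: qpoch_add norm_mult)
    then have "c \<le> norm (qpoch z q N) * norm (qpoch (z * q ^ N) q m)" using c(2)[of "N+m"] by simp
    also have "\<dots> \<le> E * norm (qpoch (z * q ^ N) q m)"
      using E[of N] by (intro mult_right_mono) auto
    finally show ?thesis using Epos by (simp add: divide_le_eq mult.commute)
  qed
  then show ?thesis using c Epos by (intro exI[of _ "c / E"]) auto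
qed

theorem qgauss:
  assumes q: "norm q < 1" and x: "norm x < 1" and nz: "\<And>j. 1 - \<rho> * y * q ^ j \<noteq> 0"
  shows "(\<lambda>m. qpoch \<rho> q m * qP x y q m / (qpoch q q m * qpoch (\<rho> * y) q m)) sums
           (qpoch_inf y q * qpoch_inf (x * \<rho>) q / (qpoch_inf (\<rho> * y) q * qpoch_inf x q))"
proof -
  define t where "t w m = qpoch \<rho> q m * qP x w q m / (qpoch q q m * qpoch (\<rho> * w) q m)" for w m
  define Y where "Y N = y * q ^ N" for N
  have YS: "Y N * q = Y (Suc N)" for N unfolding Y_def by (simp add: mult_ac)
  have Ynz: "1 - \<rho> * Y N * q ^ j \<noteq> 0" for N j
    using nz[of "N + j"] unfolding Y_def by (simp add: power_add mult_ac)
  obtain c where c: "c > 0" "\<And>n. c \<le> norm (qpoch q q n)"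
    using qpoch_lower_bound[OF q qq_nonzero[OF q]] by blast
  obtain c2 where c2: "c2 > 0" "\<And>N m. c2 \<le> norm (qpoch (\<rho> * y * q ^ N) q m)"
    using qpoch_shift_lower[OF q nz] by blast
  have c2': "c2 \<le> norm (qpoch (\<rho> * Y N) q m)" for N m
    using c2(2)[of N m] unfolding Y_def by (simp add: mult_ac)
  define E where "E = exp (norm \<rho> / (1 - norm q))"
  have E: "norm (qpoch \<rho> q n) \<le> E" for n unfolding E_def by (rule norm_qpoch_le[OF q])
  have E0: "0 \<le> E" unfolding E_def by simp
  obtain K \<theta> where K: "0 < \<theta>" "\<theta> < 1" "0 \<le> K"
     "\<And>m y'. norm y' \<le> norm y \<Longrightarrow> norm (qP x y' q m) \<le> K * \<theta> ^ m"
    using qP_bound[OF q x, of "norm y"] by blast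
  have Ynorm: "norm (Y N) \<le> norm y" for N unfolding Y_def by (rule norm_mult_qpow_le[OF q])
  have qqnz: "qpoch q q n \<noteq> 0" for n using c(1) c(2)[of n] by auto
  have Cnz: "qpoch (\<rho> * Y N) q m \<noteq> 0" for N m using c2(1) c2'[of N m] by auto
  define Bc where "Bc = E * K / (c * c2)"
  have Bc0: "0 \<le> Bc" unfolding Bc_def using E0 K c c2 by simp
  have tbound: "norm (t (Y N) m) \<le> Bc * \<theta> ^ m" for N m
  proof -
    have "norm (t (Y N) m) = norm (qpoch \<rho> q m) * norm (qP x (Y N) q m) /
            (norm (qpoch q q m) * norm (qpoch (\<rho> * Y N) q m))"
      unfolding t_def by (simp add: norm_mult norm_divide)
    also have "\<dots> \<le> (E * (K * \<theta> ^ m)) / (c * c2)"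
      using E[of m] K(4)[OF Ynorm[of N], of m] c c2(1) c2'[of N m] E0 K(1,3)
      by (intro frac_le mult_mono mult_pos_pos) auto
    finally show ?thesis unfolding Bc_def by simp
  qed
  have tsumm: "summable (t (Y N))" for N
    by (rule summable_comparison_test'[where g="\<lambda>m. Bc * \<theta> ^ m" and N=0])
      (use K tbound in \<open>auto intro!: summable_mult summable_geometric\<close>)
  define T where "T w = suminf (t w)" for w
  define G where "G w m = (if m = 0 then 0 else
      w * qpoch \<rho> q m * qP x (w * q) q (m - 1) / (qpoch q q (m - 1) * qpoch (\<rho> * w * q) q (m - 1)))" for w m
  have tele: "(1 - \<rho> * Y N) * t (Y N) m - (1 - Y N) * t (Y N * q) m = G (Y N) (Suc m) - G (Y N) m" for N m
  proof (cases m)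
    case 0
    then show ?thesis by (simp add: t_def G_def qpoch_def qP_def algebra_simps)
  next
    case (Suc k)
    define w where "w = Y N"
    have d1: "1 - q * q ^ k \<noteq> 0" by (rule qq_nonzero[OF q])
    have d2: "1 - \<rho> * w * (q * q ^ k) \<noteq> 0" using Ynz[of N "Suc k"] unfolding w_def by (simp add: mult_ac)
    have d3: "1 - \<rho> * w \<noteq> 0" using Ynz[of N 0] unfolding w_def by simp
    have Cnz': "qpoch (\<rho> * w * q) q k \<noteq> 0"
      using Cnz[of "Suc N" k] unfolding w_def by (simp add: YS[symmetric] mult_ac)
    have e1: "t w (Suc k) = qpoch \<rho> q k * (1 - \<rho> * q ^ k) * ((x - w) * qP x (w * q) q k) /
              ((qpoch q q k * (1 - q * q ^ k)) * ((1 - \<rho> * w) * qpoch (\<rho> * w * q) q k))"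
      unfolding t_def qP_Suc' qpoch_Suc'[of "\<rho> * w"] by (simp add: qpoch_Suc)
    have e2: "t (w * q) (Suc k) = qpoch \<rho> q k * (1 - \<rho> * q ^ k) * (qP x (w * q) q k * (x - w * (q * q ^ k))) /
              ((qpoch q q k * (1 - q * q ^ k)) * (qpoch (\<rho> * w * q) q k * (1 - \<rho> * w * (q * q ^ k))))"
      unfolding t_def by (simp add: qpoch_Suc qP_Suc mult_ac)
    have e3: "G w (Suc (Suc k)) = w * (qpoch \<rho> q k * (1 - \<rho> * q ^ k) * (1 - \<rho> * (q * q ^ k))) *
              (qP x (w * q) q k * (x - w * (q * q ^ k))) /
              ((qpoch q q k * (1 - q * q ^ k)) * (qpoch (\<rho> * w * q) q k * (1 - \<rho> * w * (q * q ^ k))))"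
      unfolding G_def by (simp add: qpoch_Suc qP_Suc mult_ac)
    have e4: "G w (Suc k) = w * (qpoch \<rho> q k * (1 - \<rho> * q ^ k)) * qP x (w * q) q k /
              (qpoch q q k * qpoch (\<rho> * w * q) q k)"
      unfolding G_def by (simp add: qpoch_Suc)
    have "(1 - \<rho> * w) * t w (Suc k) - (1 - w) * t (w * q) (Suc k) = G w (Suc (Suc k)) - G w (Suc k)"
      unfolding e1 e2 e3 e4
      by (rule gauss_alg[OF qqnz[of k] Cnz' d1 d2 d3 refl refl refl])
    then show ?thesis using Suc unfolding w_def by simp
  qed
  have Gform: "G (Y N) (Suc m) = Y N * (1 - \<rho> * q ^ m) * t (Y (Suc N)) m" for N m
  proof -
    have "G (Y N) (Suc m) = Y N * (qpoch \<rho> q m * (1 - \<rho> * q ^ m)) * qP x (Y N * q) q m /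
            (qpoch q q m * qpoch (\<rho> * Y N * q) q m)"
      unfolding G_def by (simp add: qpoch_Suc)
    also have "\<dots> = Y N * (1 - \<rho> * q ^ m) * (qpoch \<rho> q m * qP x (Y N * q) q m /
            (qpoch q q m * qpoch (\<rho> * (Y N * q)) q m))"
      by (simp add: mult_ac)
    finally show ?thesis unfolding t_def YS .
  qed
  have Gbound: "norm (G (Y N) (Suc m)) \<le> norm y * (1 + norm \<rho>) * Bc * \<theta> ^ m" for N m
  proof -
    have n1: "norm (1 - \<rho> * q ^ m) \<le> 1 + norm \<rho>"
      using norm_triangle_ineq4[of 1 "\<rho> * q ^ m"] norm_mult_qpow_le[OF q, of \<rho> m] by simp
    have "norm (G (Y N) (Suc m)) = norm (Y N) * norm (1 - \<rho> * q ^ m) * norm (t (Y (Suc N)) m)"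
      unfolding Gform by (simp add: norm_mult)
    also have "\<dots> \<le> norm y * (1 + norm \<rho>) * (Bc * \<theta> ^ m)"
      using Ynorm[of N] n1 tbound[of "Suc N" m] by (intro mult_mono) auto
    finally show ?thesis by (simp add: mult_ac)
  qed
  have Glim: "G (Y N) \<longlonglongrightarrow> 0" for N
  proof -
    have lim: "(\<lambda>m. (norm y * (1 + norm \<rho>) * Bc) * \<theta> ^ m) \<longlonglongrightarrow> 0"
      by (rule tendsto_mult_right_zero[OF LIMSEQ_power_zero]) (use K in auto)
    have "(\<lambda>m. G (Y N) (Suc m)) \<longlonglongrightarrow> 0"
      by (rule Lim_null_comparison[OF _ lim]) (rule always_eventually, rule allI, rule Gbound)
    then show ?thesis by (rule LIMSEQ_imp_Suc)
  qed
  have funeq: "(1 - \<rho> * Y N) * T (Y N) = (1 - Y N) * T (Y (Suc N))" for N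
  proof -
    have "(\<lambda>m. G (Y N) (Suc m) - G (Y N) m) sums (0 - G (Y N) 0)"
      by (rule telescope_sums[OF Glim])
    then have s1: "(\<lambda>m. (1 - \<rho> * Y N) * t (Y N) m - (1 - Y N) * t (Y N * q) m) sums 0"
      by (simp add: tele G_def)
    have s2: "(\<lambda>m. (1 - \<rho> * Y N) * t (Y N) m - (1 - Y N) * t (Y N * q) m) sums
               ((1 - \<rho> * Y N) * T (Y N) - (1 - Y N) * T (Y (Suc N)))"
      unfolding T_def YS
      by (intro sums_diff sums_mult summable_sums tsumm)
    show ?thesis using sums_unique2[OF s1 s2] by simp
  qed
  have iter: "T y * qpoch (\<rho> * y) q N = qpoch y q N * T (Y N)" for N
  proof (induction N)
    case 0 then show ?case by (simp add: Y_def)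
  next
    case (Suc N)
    have "T y * qpoch (\<rho> * y) q (Suc N) = (T y * qpoch (\<rho> * y) q N) * (1 - \<rho> * Y N)"
      by (simp add: qpoch_Suc Y_def mult_ac)
    also have "\<dots> = qpoch y q N * ((1 - \<rho> * Y N) * T (Y N))" using Suc by simp
    also have "\<dots> = qpoch y q (Suc N) * T (Y (Suc N))"
      using funeq[of N] by (simp add: qpoch_Suc Y_def mult_ac)
    finally show ?case .
  qed
  have Tlim: "(\<lambda>N. T (Y N)) \<longlonglongrightarrow> qpoch_inf (x * \<rho>) q / qpoch_inf x q"
  proof -
    have Y0: "Y \<longlonglongrightarrow> 0" unfolding Y_def
      using q by (intro tendsto_mult_right_zero LIMSEQ_power_zero) auto
    have "(\<lambda>n. t (Y n) k) \<longlonglongrightarrow> t 0 k" for k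
    proof -
      have l1: "(\<lambda>n. qP x (Y n) q k) \<longlonglongrightarrow> qP x 0 q k"
        unfolding qP_def
        by (rule tendsto_prod, rule tendsto_diff, rule tendsto_const, rule tendsto_mult[OF Y0 tendsto_const])
      have l2: "(\<lambda>n. qpoch (\<rho> * Y n) q k) \<longlonglongrightarrow> qpoch (\<rho> * 0) q k"
        unfolding qpoch_def
        by (rule tendsto_prod, rule tendsto_diff, rule tendsto_const,
            rule tendsto_mult[OF tendsto_mult[OF tendsto_const Y0] tendsto_const])
      have nz0: "qpoch q q k * qpoch (\<rho> * 0) q k \<noteq> 0" using qqnz[of k] by (simp add: qpoch_def)
      show ?thesis unfolding t_def
        by (rule tendsto_divide[OF tendsto_mult[OF tendsto_const l1] tendsto_mult[OF tendsto_const l2] nz0])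
    qed
    moreover have "eventually (\<lambda>(k, n). norm (t (Y n) k) \<le> Bc * \<theta> ^ k) (at_top \<times>\<^sub>F sequentially)"
      by (intro always_eventually allI, clarify) (rule tbound)
    moreover have "summable (\<lambda>k. Bc * \<theta> ^ k)"
      using K by (intro summable_mult summable_geometric) auto
    ultimately have "(\<lambda>n. suminf (t (Y n))) \<longlonglongrightarrow> suminf (t 0)"
      using tannerys_theorem[of "\<lambda>k n. t (Y n) k" "t 0" sequentially] by auto
    moreover have "t 0 = (\<lambda>m. qpoch \<rho> q m * x ^ m / qpoch q q m)"
      by (auto simp: t_def fun_eq_iff qpoch_def)
    ultimately show ?thesis unfolding T_def using sums_unique[OF qbinomial[OF q x, of \<rho>]] by simp
  qed
  have "(\<lambda>N. T y * qpoch (\<rho> * y) q N) \<longlonglongrightarrow> T y * qpoch_inf (\<rho> * y) q"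
    by (intro tendsto_intros qpoch_lim q)
  moreover have "(\<lambda>N. T y * qpoch (\<rho> * y) q N) \<longlonglongrightarrow> qpoch_inf y q * (qpoch_inf (x * \<rho>) q / qpoch_inf x q)"
    unfolding iter by (intro tendsto_intros qpoch_lim q Tlim)
  ultimately have eq: "T y * qpoch_inf (\<rho> * y) q = qpoch_inf y q * (qpoch_inf (x * \<rho>) q / qpoch_inf x q)"
    using LIMSEQ_unique by blast
  have "qpoch_inf (\<rho> * y) q \<noteq> 0" by (rule qpoch_inf_nonzero[OF q nz])
  moreover have "qpoch_inf x q \<noteq> 0" by (rule qpoch_inf_nonzero[OF q x_nonzero[OF q x]])
  ultimately have "T y = qpoch_inf y q * qpoch_inf (x * \<rho>) q / (qpoch_inf (\<rho> * y) q * qpoch_inf x q)"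
    using eq by (simp add: field_simps)
  moreover have "summable (t y)" using tsumm[of 0] by (simp add: Y_def)
  ultimately show ?thesis unfolding T_def t_def by (simp add: sums_iff)
qed


theorem bailey_inner:
  assumes q: "norm q < 1" and x: "norm x < 1" and \<rho>y: "\<rho> * y = a * q"
    and anz: "\<And>j. 1 - a * q * q ^ j \<noteq> 0"
  shows "(\<lambda>m. qpoch \<rho> q (k + m) * qP x y q (k + m) * (1 / (qpoch q q (k + m - k) * qpoch (a * q) q (k + m + k))))
     sums (qpoch \<rho> q k * qP x y q k * qpoch_inf (y * q ^ k) q * qpoch_inf (x * \<rho> * q ^ k) q /
           (qpoch_inf (a * q) q * qpoch_inf x q))"
proof -
  have e: "\<rho> * q ^ k * (y * q ^ k) = a * q * q ^ (2 * k)"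
  proof -
    have p: "q ^ (2 * k) = q ^ k * q ^ k" by (simp add: mult_2 power_add)
    have "\<rho> * q ^ k * (y * q ^ k) = (\<rho> * y) * (q ^ k * q ^ k)" by (simp add: mult_ac)
    then show ?thesis by (simp add: \<rho>y p)
  qed
  have nz: "1 - \<rho> * q ^ k * (y * q ^ k) * q ^ j \<noteq> 0" for j
    using anz[of "2 * k + j"] unfolding e by (simp add: power_add mult_ac)
  have aqnz: "qpoch (a * q) q (2 * k) \<noteq> 0"
    by (rule qpoch_nonzero) (use anz in \<open>simp add: mult_ac\<close>)
  define c where "c = qpoch \<rho> q k * qP x y q k / qpoch (a * q) q (2 * k)"
  have s: "(\<lambda>m. c * (qpoch (\<rho> * q ^ k) q m * qP x (y * q ^ k) q m /
            (qpoch q q m * qpoch (\<rho> * q ^ k * (y * q ^ k)) q m))) sums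
         (c * (qpoch_inf (y * q ^ k) q * qpoch_inf (x * (\<rho> * q ^ k)) q /
            (qpoch_inf (\<rho> * q ^ k * (y * q ^ k)) q * qpoch_inf x q)))"
    by (rule sums_mult[OF qgauss[OF q x nz]])
  have f: "c * (qpoch (\<rho> * q ^ k) q m * qP x (y * q ^ k) q m /
            (qpoch q q m * qpoch (\<rho> * q ^ k * (y * q ^ k)) q m))
        = qpoch \<rho> q (k + m) * qP x y q (k + m) * (1 / (qpoch q q (k + m - k) * qpoch (a * q) q (k + m + k)))" for m
  proof -
    have "qpoch (a * q) q (k + m + k) = qpoch (a * q) q (2 * k) * qpoch (\<rho> * q ^ k * (y * q ^ k)) q m"
    proof -
      have "qpoch (a * q) q (k + m + k) = qpoch (a * q) q (2 * k + m)"
        by (rule arg_cong[where f="qpoch (a * q) q"]) simp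
      also have "\<dots> = qpoch (a * q) q (2 * k) * qpoch (a * q * q ^ (2 * k)) q m" by (rule qpoch_add)
      finally show ?thesis unfolding e .
    qed
    then show ?thesis unfolding c_def qpoch_add qP_add using aqnz by (simp add: field_simps)
  qed
  have v: "c * (qpoch_inf (y * q ^ k) q * qpoch_inf (x * (\<rho> * q ^ k)) q /
            (qpoch_inf (\<rho> * q ^ k * (y * q ^ k)) q * qpoch_inf x q))
        = qpoch \<rho> q k * qP x y q k * qpoch_inf (y * q ^ k) q * qpoch_inf (x * \<rho> * q ^ k) q /
           (qpoch_inf (a * q) q * qpoch_inf x q)"
  proof -
    have "qpoch_inf (a * q) q = qpoch (a * q) q (2 * k) * qpoch_inf (\<rho> * q ^ k * (y * q ^ k)) q"
      unfolding e by (rule qpoch_inf_split[OF q])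
    then show ?thesis unfolding c_def using aqnz by (simp add: mult_ac)
  qed
  show ?thesis using s unfolding f v .
qed


lemma partial_swap:
  fixes \<alpha> \<delta> :: "nat \<Rightarrow> complex" and M :: "nat \<Rightarrow> nat \<Rightarrow> complex"
  shows "(\<Sum>n\<le>N. \<delta> n * (\<Sum>k\<le>n. \<alpha> k * M n k)) = (\<Sum>k\<le>N. \<alpha> k * (\<Sum>m\<le>N - k. \<delta> (k + m) * M (k + m) k))"
proof (induction N)
  case 0 then show ?case by simp
next
  case (Suc N)
  define g where "g k m = \<delta> (k + m) * M (k + m) k" for k m
  have step: "(\<Sum>m\<le>Suc N - k. g k m) = (\<Sum>m\<le>N - k. g k m) + \<delta> (Suc N) * M (Suc N) k" if "k \<le> N" for k
  proof -
    have "Suc N - k = Suc (N - k)" using that by simp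
    moreover have "k + Suc (N - k) = Suc N" using that by simp
    ultimately show ?thesis unfolding g_def by simp
  qed
  have "(\<Sum>k\<le>Suc N. \<alpha> k * (\<Sum>m\<le>Suc N - k. g k m))
      = (\<Sum>k\<le>N. \<alpha> k * (\<Sum>m\<le>Suc N - k. g k m)) + \<alpha> (Suc N) * (\<delta> (Suc N) * M (Suc N) (Suc N))"
    by (simp add: g_def)
  also have "(\<Sum>k\<le>N. \<alpha> k * (\<Sum>m\<le>Suc N - k. g k m))
      = (\<Sum>k\<le>N. \<alpha> k * (\<Sum>m\<le>N - k. g k m)) + (\<Sum>k\<le>N. \<alpha> k * (\<delta> (Suc N) * M (Suc N) k))"
    by (simp add: step distrib_left sum.distrib)
  finally have "(\<Sum>k\<le>Suc N. \<alpha> k * (\<Sum>m\<le>Suc N - k. g k m))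
      = (\<Sum>k\<le>N. \<alpha> k * (\<Sum>m\<le>N - k. g k m)) + \<delta> (Suc N) * (\<Sum>k\<le>Suc N. \<alpha> k * M (Suc N) k)"
    by (simp add: sum_distrib_left algebra_simps)
  then show ?case using Suc by (simp add: g_def)
qed

lemma null_conv:
  fixes u :: "nat \<Rightarrow> complex"
  assumes u: "u \<longlonglongrightarrow> 0" and l: "0 \<le> lam" "lam < 1"
  shows "(\<lambda>N. \<Sum>k\<le>N. lam ^ (N - k) * norm (u k)) \<longlonglongrightarrow> 0"
proof -
  obtain U where U: "U > 0" "\<And>n. norm (u n) \<le> U"
    using convergent_imp_Bseq[of u] u by (auto simp: Bseq_def convergent_def)
  define a where "a j N = (if j \<le> N then lam ^ j * norm (u (N - j)) else 0)" for j N
  have eq: "(\<Sum>k\<le>N. lam ^ (N - k) * norm (u k)) = suminf (\<lambda>j. a j N)" for N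
  proof -
    have "(\<Sum>k\<le>N. lam ^ (N - k) * norm (u k)) = (\<Sum>k\<in>{0..N}. lam ^ (N - k) * norm (u k))"
      by (simp add: atMost_atLeast0)
    also have "\<dots> = (\<Sum>j\<in>{0..N}. lam ^ (N - (N + 0 - j)) * norm (u (N + 0 - j)))"
      by (rule sum.atLeastAtMost_rev)
    also have "\<dots> = (\<Sum>j\<in>{0..N}. a j N)"
      by (intro sum.cong) (auto simp: a_def)
    also have "\<dots> = suminf (\<lambda>j. a j N)"
      by (rule suminf_finite[symmetric]) (auto simp: a_def)
    finally show ?thesis .
  qed
  have lim: "(\<lambda>N. a j N) \<longlonglongrightarrow> 0" for j
  proof -
    have "(\<lambda>n. lam ^ j * norm (u n)) \<longlonglongrightarrow> lam ^ j * 0"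
      by (intro tendsto_intros tendsto_norm_zero u)
    then have "(\<lambda>n. a j (n + j)) \<longlonglongrightarrow> 0" by (simp add: a_def)
    then show ?thesis by (rule LIMSEQ_offset)
  qed
  have bnd: "eventually (\<lambda>(j, N). norm (a j N) \<le> U * lam ^ j) (at_top \<times>\<^sub>F sequentially)"
  proof (intro always_eventually allI, clarify)
    fix j N
    show "norm (a j N) \<le> U * lam ^ j"
    proof (cases "j \<le> N")
      case True
      have "norm (u (N - j)) * lam ^ j \<le> U * lam ^ j"
        using U(2)[of "N - j"] l by (intro mult_right_mono) auto
      moreover have "norm (a j N) = lam ^ j * norm (u (N - j))" using True l by (simp add: a_def)
      ultimately show ?thesis by (simp add: mult.commute)
    next
      case False then show ?thesis using U(1) l by (simp add: a_def)
    qed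
  qed
  have "summable (\<lambda>j. U * lam ^ j)" using l by (intro summable_mult summable_geometric) auto
  then have "(\<lambda>N. suminf (\<lambda>j. a j N)) \<longlonglongrightarrow> suminf (\<lambda>j. 0::real)"
    using tannerys_theorem[of "\<lambda>j N. a j N" "\<lambda>j. 0" sequentially] lim bnd by auto
  then show ?thesis unfolding eq by simp
qed

theorem bailey_conv:
  fixes \<alpha> \<beta> \<delta> \<gamma> :: "nat \<Rightarrow> complex" and M :: "nat \<Rightarrow> nat \<Rightarrow> complex"
  assumes \<beta>: "\<And>n. \<beta> n = (\<Sum>k\<le>n. \<alpha> k * M n k)"
    and g: "\<And>k. (\<lambda>m. \<delta> (k + m) * M (k + m) k) sums \<gamma> k"
    and bd: "\<And>k m. K0 \<le> k \<Longrightarrow> norm (\<delta> (k + m) * M (k + m) k) \<le> C * lam ^ m * norm (\<gamma> k)"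
    and l: "0 \<le> lam" "lam < 1" and C: "0 \<le> C"
    and s: "summable (\<lambda>k. \<alpha> k * \<gamma> k)"
  shows "(\<lambda>n. \<delta> n * \<beta> n) sums (\<Sum>k. \<alpha> k * \<gamma> k)"
proof -
  define t where "t k m = \<delta> (k + m) * M (k + m) k" for k m
  define R where "R N k = \<gamma> k - (\<Sum>m\<le>N - k. t k m)" for N k
  define E where "E N = (\<Sum>k\<le>N. \<alpha> k * R N k)" for N
  have part: "(\<Sum>n\<le>N. \<delta> n * \<beta> n) = (\<Sum>k\<le>N. \<alpha> k * \<gamma> k) - E N" for N
    unfolding \<beta> partial_swap E_def R_def t_def
    by (simp add: right_diff_distrib sum_subtractf)
  have tsum: "summable (t k)" for k using g[of k] unfolding t_def by (simp add: sums_iff)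
  have tail: "R N k = (\<Sum>i. t k (i + (N - k + 1)))" for N k
  proof -
    have e1: "\<gamma> k = (\<Sum>i. t k (i + (N - k + 1))) + (\<Sum>i<N - k + 1. t k i)"
      using suminf_split_initial_segment[OF tsum[of k], of "N - k + 1"] sums_unique[OF g[of k]]
      unfolding t_def by simp
    have h: "(\<Sum>i<N - k + 1. t k i) = (\<Sum>m\<le>N - k. t k m)"
      by (simp only: Suc_eq_plus1[symmetric] lessThan_Suc_atMost)
    show ?thesis unfolding R_def using e1 unfolding h by (simp only: add_diff_cancel_right')
  qed
  have Rbd: "norm (R N k) \<le> C / (1 - lam) * lam ^ (N - k) * norm (\<gamma> k)" if "K0 \<le> k" for N k
  proof -
    define B where "B = C * lam ^ (N - k + 1) * norm (\<gamma> k)"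
    have B0: "0 \<le> B" unfolding B_def using C l by simp
    have "norm (R N k) \<le> (\<Sum>i. B * lam ^ i)"
      unfolding tail
    proof (rule norm_suminf_le)
      fix i
      have "norm (t k (i + (N - k + 1))) \<le> C * lam ^ (i + (N - k + 1)) * norm (\<gamma> k)"
        using bd[OF that] unfolding t_def by (metis add.assoc)
      also have "\<dots> = B * lam ^ i" unfolding B_def by (simp add: power_add mult_ac)
      finally show "norm (t k (i + (N - k + 1))) \<le> B * lam ^ i" .
    qed (use l in \<open>intro summable_mult summable_geometric, auto\<close>)
    also have "\<dots> = B / (1 - lam)" using l by (simp add: suminf_mult suminf_geometric divide_inverse)
    also have "\<dots> \<le> C / (1 - lam) * lam ^ (N - k) * norm (\<gamma> k)"
    proof -
      have "B \<le> C * lam ^ (N - k) * norm (\<gamma> k)"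
      proof -
        have "lam ^ (N - k + 1) \<le> lam ^ (N - k)" using l by (intro power_decreasing) auto
        then have "(C * norm (\<gamma> k)) * lam ^ (N - k + 1) \<le> (C * norm (\<gamma> k)) * lam ^ (N - k)"
          using C by (intro mult_left_mono) auto
        then show ?thesis unfolding B_def by (simp add: mult_ac)
      qed
      then show ?thesis using l by (simp add: divide_right_mono mult_ac)
    qed
    finally show ?thesis .
  qed
  define u where "u k = \<alpha> k * \<gamma> k" for k
  have u0: "u \<longlonglongrightarrow> 0" unfolding u_def by (rule summable_LIMSEQ_zero[OF s])
  define F where "F N = (\<Sum>k<K0. \<alpha> k * R N k)" for N
  have Flim: "F \<longlonglongrightarrow> 0"
  proof -
    have "(\<lambda>N. \<alpha> k * R N k) \<longlonglongrightarrow> 0" for k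
    proof -
      have "(\<lambda>n. \<Sum>m\<le>n. t k m) \<longlonglongrightarrow> \<gamma> k"
        using g[of k] unfolding sums_def_le t_def .
      then have "(\<lambda>n. \<alpha> k * (\<gamma> k - (\<Sum>m\<le>n. t k m))) \<longlonglongrightarrow> \<alpha> k * (\<gamma> k - \<gamma> k)"
        by (intro tendsto_intros)
      moreover have "(\<lambda>n. \<alpha> k * R (n + k) k) = (\<lambda>n. \<alpha> k * (\<gamma> k - (\<Sum>m\<le>n. t k m)))"
        by (simp add: R_def)
      ultimately have "(\<lambda>n. \<alpha> k * R (n + k) k) \<longlonglongrightarrow> 0" by simp
      then show ?thesis by (rule LIMSEQ_offset)
    qed
    then have "(\<lambda>N. \<Sum>k<K0. \<alpha> k * R N k) \<longlonglongrightarrow> (\<Sum>k<K0. 0)"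
      by (intro tendsto_sum) auto
    then show ?thesis unfolding F_def by simp
  qed
  have Elim: "E \<longlonglongrightarrow> 0"
  proof -
    have S: "(\<lambda>N. \<Sum>k\<le>N. lam ^ (N - k) * norm (u k)) \<longlonglongrightarrow> 0" by (rule null_conv[OF u0 l])
    have G0: "(\<lambda>N. norm (F N) + C / (1 - lam) * (\<Sum>k\<le>N. lam ^ (N - k) * norm (u k))) \<longlonglongrightarrow> 0 + C / (1 - lam) * 0"
      by (intro tendsto_intros S tendsto_norm_zero Flim)
    then have G: "(\<lambda>N. norm (F N) + C / (1 - lam) * (\<Sum>k\<le>N. lam ^ (N - k) * norm (u k))) \<longlonglongrightarrow> 0"
      by simp
    have "eventually (\<lambda>N. norm (E N) \<le> norm (F N) + C / (1 - lam) * (\<Sum>k\<le>N. lam ^ (N - k) * norm (u k))) sequentially"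
      unfolding eventually_sequentially
    proof (intro exI[of _ K0] allI impI)
      fix N assume N: "K0 \<le> N"
      have split: "{..N} = {..<K0} \<union> {K0..N}" using N by auto
      have "E N = F N + (\<Sum>k\<in>{K0..N}. \<alpha> k * R N k)"
        unfolding E_def F_def split by (subst sum.union_disjoint) auto
      then have "norm (E N) \<le> norm (F N) + norm (\<Sum>k\<in>{K0..N}. \<alpha> k * R N k)"
        by (simp add: norm_triangle_ineq)
      also have "norm (\<Sum>k\<in>{K0..N}. \<alpha> k * R N k) \<le> (\<Sum>k\<in>{K0..N}. C / (1 - lam) * (lam ^ (N - k) * norm (u k)))"
      proof (rule order.trans[OF norm_sum sum_mono])
        fix k assume k: "k \<in> {K0..N}"
        have "norm (\<alpha> k * R N k) = norm (\<alpha> k) * norm (R N k)" by (simp add: norm_mult)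
        also have "\<dots> \<le> norm (\<alpha> k) * (C / (1 - lam) * lam ^ (N - k) * norm (\<gamma> k))"
          using Rbd[of k N] k by (intro mult_left_mono) auto
        also have "\<dots> = C / (1 - lam) * (lam ^ (N - k) * norm (u k))"
          unfolding u_def by (simp add: norm_mult mult_ac)
        finally show "norm (\<alpha> k * R N k) \<le> C / (1 - lam) * (lam ^ (N - k) * norm (u k))" .
      qed
      also have "\<dots> = C / (1 - lam) * (\<Sum>k\<in>{K0..N}. lam ^ (N - k) * norm (u k))"
        by (simp add: sum_distrib_left)
      also have "\<dots> \<le> C / (1 - lam) * (\<Sum>k\<le>N. lam ^ (N - k) * norm (u k))"
        using C l by (intro mult_left_mono sum_mono2) auto
      finally show "norm (E N) \<le> norm (F N) + C / (1 - lam) * (\<Sum>k\<le>N. lam ^ (N - k) * norm (u k))"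
        by simp
    qed
    then show ?thesis by (rule Lim_null_comparison[OF _ G])
  qed
  have "(\<lambda>N. \<Sum>n\<le>N. \<delta> n * \<beta> n) \<longlonglongrightarrow> (\<Sum>k. \<alpha> k * \<gamma> k) - 0"
    unfolding part by (intro tendsto_diff Elim summable_LIMSEQ' s)
  then show ?thesis unfolding sums_def_le by simp
qed


lemma qpoch_inf_zero[simp]: "qpoch_inf 0 q = 1"
  by (simp add: qpoch_inf_def)

lemma qpoch_zero[simp]: "qpoch 0 q n = 1"
  by (simp add: qpoch_def)

theorem master_bailey:
  assumes q: "norm q < 1" and x: "norm x < 1" and \<rho>y: "\<rho> * y = a * q"
    and anz: "\<And>j. 1 - a * q * q ^ j \<noteq> 0" and ynz: "\<And>j. 1 - y * q ^ j \<noteq> 0"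
    and x\<rho>nz: "\<And>j. 1 - x * \<rho> * q ^ j \<noteq> 0"
    and bp: "bailey_pair \<alpha> \<beta> a q"
    and s: "summable (\<lambda>k. \<alpha> k * (qpoch \<rho> q k * qP x y q k / (qpoch y q k * qpoch (x * \<rho>) q k)))"
  shows "(\<lambda>n. qpoch \<rho> q n * qP x y q n * \<beta> n) sums
     (qpoch_inf y q * qpoch_inf (x * \<rho>) q / (qpoch_inf (a * q) q * qpoch_inf x q) *
       (\<Sum>k. \<alpha> k * (qpoch \<rho> q k * qP x y q k / (qpoch y q k * qpoch (x * \<rho>) q k))))"
proof -
  define Cst where "Cst = qpoch_inf y q * qpoch_inf (x * \<rho>) q / (qpoch_inf (a * q) q * qpoch_inf x q)"
  define h where "h k = qpoch \<rho> q k * qP x y q k / (qpoch y q k * qpoch (x * \<rho>) q k)" for k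
  define \<gamma> where "\<gamma> k = Cst * h k" for k
  define \<delta> where "\<delta> n = qpoch \<rho> q n * qP x y q n" for n
  define M where "M n k = 1 / (qpoch q q (n - k) * qpoch (a * q) q (n + k))" for n k
  have aqnz: "\<And>j. 1 - a * q * q ^ j \<noteq> 0" by (rule anz)
  have Cnz: "Cst \<noteq> 0"
    unfolding Cst_def using qpoch_inf_nonzero[OF q ynz] qpoch_inf_nonzero[OF q x\<rho>nz]
      qpoch_inf_nonzero[OF q anz] qpoch_inf_nonzero[OF q x_nonzero[OF q x]] by simp
  have ykz: "qpoch y q k \<noteq> 0" for k by (rule qpoch_nonzero[OF ynz])
  have xkz: "qpoch (x * \<rho>) q k \<noteq> 0" for k by (rule qpoch_nonzero[OF x\<rho>nz])
  have \<beta>eq: "\<beta> n = (\<Sum>k\<le>n. \<alpha> k * M n k)" for n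
    using bp unfolding bailey_pair_def M_def by simp
  have g: "(\<lambda>m. \<delta> (k + m) * M (k + m) k) sums \<gamma> k" for k
  proof -
    have gi: "(\<lambda>m. qpoch \<rho> q (k + m) * qP x y q (k + m) * (1 / (qpoch q q (k + m - k) * qpoch (a * q) q (k + m + k))))
     sums (qpoch \<rho> q k * qP x y q k * qpoch_inf (y * q ^ k) q * qpoch_inf (x * \<rho> * q ^ k) q /
           (qpoch_inf (a * q) q * qpoch_inf x q))"
      by (rule bailey_inner[OF q x \<rho>y anz])
    have "\<gamma> k = qpoch \<rho> q k * qP x y q k * qpoch_inf (y * q ^ k) q * qpoch_inf (x * \<rho> * q ^ k) q /
           (qpoch_inf (a * q) q * qpoch_inf x q)"
      unfolding \<gamma>_def Cst_def h_def
      using qpoch_inf_split[OF q, of y k] qpoch_inf_split[OF q, of "x * \<rho>" k] ykz[of k] xkz[of k]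
      by (simp add: field_simps)
    then show ?thesis using gi unfolding \<delta>_def M_def by simp
  qed
  obtain c1 where c1: "c1 > 0" "\<And>n. c1 \<le> norm (qpoch q q n)"
    using qpoch_lower_bound[OF q qq_nonzero[OF q]] by blast
  obtain c2 where c2: "c2 > 0" "\<And>n. c2 \<le> norm (qpoch (a * q) q n)"
    using qpoch_lower_bound[OF q anz] by blast
  obtain K \<theta> where K: "0 < \<theta>" "\<theta> < 1" "0 \<le> K"
     "\<And>m y'. norm y' \<le> norm y \<Longrightarrow> norm (qP x y' q m) \<le> K * \<theta> ^ m"
    using qP_bound[OF q x, of "norm y"] by blast
  define E1 where "E1 = exp (norm \<rho> / (1 - norm q))"
  define Ey where "Ey = exp (norm y / (1 - norm q))"
  define Ex where "Ex = exp (norm (x * \<rho>) / (1 - norm q))"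
  have E1: "norm (qpoch (\<rho> * q ^ k) q m) \<le> E1" for k m
  proof -
    have "norm (qpoch (\<rho> * q ^ k) q m) \<le> exp (norm (\<rho> * q ^ k) / (1 - norm q))" by (rule norm_qpoch_le[OF q])
    also have "\<dots> \<le> E1" unfolding E1_def using norm_mult_qpow_le[OF q, of \<rho> k] q
      by (intro exp_mono divide_right_mono) auto
    finally show ?thesis .
  qed
  have Ey: "norm (qpoch y q k) \<le> Ey" for k unfolding Ey_def by (rule norm_qpoch_le[OF q])
  have Ex: "norm (qpoch (x * \<rho>) q k) \<le> Ex" for k unfolding Ex_def by (rule norm_qpoch_le[OF q])
  have Epos: "E1 > 0" "Ey > 0" "Ex > 0" unfolding E1_def Ey_def Ex_def by auto
  define C0 where "C0 = E1 * K * Ey * Ex / (c1 * c2 * norm Cst)"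
  have C0: "0 \<le> C0" unfolding C0_def using Epos K c1 c2 by simp
  have bd: "norm (\<delta> (k + m) * M (k + m) k) \<le> C0 * \<theta> ^ m * norm (\<gamma> k)" for k m
  proof -
    define P where "P = norm (qpoch \<rho> q k * qP x y q k)"
    have P0: "0 \<le> P" unfolding P_def by simp
    have "norm (\<delta> (k + m) * M (k + m) k) =
        P * (norm (qpoch (\<rho> * q ^ k) q m) * norm (qP x (y * q ^ k) q m)) /
        (norm (qpoch q q m) * norm (qpoch (a * q) q (k + m + k)))"
      unfolding \<delta>_def M_def P_def qpoch_add qP_add by (simp add: norm_mult norm_divide)
    also have "\<dots> \<le> P * (E1 * (K * \<theta> ^ m)) / (c1 * c2)"
      using E1[of k m] K(4)[OF norm_mult_qpow_le[OF q, of y k], of m] c1 c2 P0 Epos K(1,3)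
      by (intro frac_le mult_left_mono mult_mono mult_pos_pos mult_nonneg_nonneg) auto
    also have "P \<le> norm (\<gamma> k) * Ey * Ex / norm Cst"
    proof -
      have "norm (\<gamma> k) = norm Cst * P / (norm (qpoch y q k) * norm (qpoch (x * \<rho>) q k))"
        unfolding \<gamma>_def h_def P_def by (simp add: norm_mult norm_divide)
      then have "norm (\<gamma> k) * (norm (qpoch y q k) * norm (qpoch (x * \<rho>) q k)) = norm Cst * P"
        using ykz[of k] xkz[of k] by simp
      moreover have "norm (\<gamma> k) * (norm (qpoch y q k) * norm (qpoch (x * \<rho>) q k)) \<le> norm (\<gamma> k) * (Ey * Ex)"
        using Ey[of k] Ex[of k] Epos by (intro mult_left_mono mult_mono) auto
      ultimately have "norm Cst * P \<le> norm (\<gamma> k) * Ey * Ex" by (simp add: mult_ac)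
      then show ?thesis using Cnz by (simp add: field_simps)
    qed
    then have "P * (E1 * (K * \<theta> ^ m)) / (c1 * c2) \<le> (norm (\<gamma> k) * Ey * Ex / norm Cst) * (E1 * (K * \<theta> ^ m)) / (c1 * c2)"
      using Epos K c1 c2 by (intro divide_right_mono mult_right_mono) auto
    also have "\<dots> = C0 * \<theta> ^ m * norm (\<gamma> k)" unfolding C0_def by (simp add: field_simps)
    finally show ?thesis .
  qed
  have s2: "summable (\<lambda>k. \<alpha> k * \<gamma> k)"
    using summable_mult[OF s, of Cst] unfolding \<gamma>_def h_def by (simp add: mult_ac)
  have "(\<lambda>n. \<delta> n * \<beta> n) sums (\<Sum>k. \<alpha> k * \<gamma> k)"
    by (rule bailey_conv[OF \<beta>eq g, of 0 C0 \<theta>]) (use bd K C0 s2 in auto)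
  moreover have "(\<Sum>k. \<alpha> k * \<gamma> k) = Cst * (\<Sum>k. \<alpha> k * h k)"
    unfolding \<gamma>_def using suminf_mult[OF s, of Cst] unfolding h_def by (simp add: mult_ac)
  ultimately show ?thesis unfolding \<delta>_def Cst_def h_def by simp
qed


lemma qP0_tri: "qP 0 (s * q) q n = (-1) ^ n * s ^ n * q ^ (n * (n + 1) div 2)"
proof (induction n)
  case (Suc n)
  have e: "Suc n * (Suc n + 1) div 2 = n * (n + 1) div 2 + Suc n"
  proof -
    have "Suc n * (Suc n + 1) = n * (n + 1) + 2 * Suc n" by simp
    then show ?thesis by simp
  qed
  show ?case unfolding qP_Suc Suc e by (simp add: power_add mult_ac)
qed simp

lemma qP0_sq: "r ^ 2 = q \<Longrightarrow> qP 0 (s * r) q n = (-1) ^ n * s ^ n * r ^ (n ^ 2)"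
proof (induction n)
  case (Suc n)
  have e: "Suc n ^ 2 = n ^ 2 + (2 * n + 1)" by (simp add: power2_eq_square)
  have "q ^ n = r ^ (2 * n)" using Suc.prems by (simp add: power_mult)
  then show ?case unfolding qP_Suc Suc.IH[OF Suc.prems] e by (simp add: power_add mult_ac)
qed simp

lemma qP_scale: "qP x (x * b) q n = x ^ n * qpoch b q n"
  by (induction n) (simp_all add: qP_Suc qpoch_Suc algebra_simps)

lemma part1:
  fixes a q s :: complex and \<alpha> \<beta> :: "nat \<Rightarrow> complex"
  assumes q: "norm q < 1" and hs: "s ^ 2 = a" and bp: "bailey_pair \<alpha> \<beta> a q"
    and anz: "\<forall>j\<ge>1. a * q ^ j \<noteq> 1"
    and h1: "\<forall>n. 1 - s * q ^ n \<noteq> 0"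
    and sumR: "summable (\<lambda>n. (1 - s) * (-1) ^ n * s ^ n * q ^ (n * (n + 1) div 2) * \<alpha> n / (1 - s * q ^ n))"
  shows "(\<Sum>n. qpoch s q n * (-1) ^ n * s ^ n * q ^ (n * (n + 1) div 2) * \<beta> n)
         = qpoch_inf (s * q) q / qpoch_inf (a * q) q *
           (\<Sum>n. (1 - s) * (-1) ^ n * s ^ n * q ^ (n * (n + 1) div 2) * \<alpha> n / (1 - s * q ^ n))"
proof -
  have anz': "1 - a * q * q ^ j \<noteq> 0" for j using anz[rule_format, of "Suc j"] by (auto simp: mult_ac)
  have ynz: "1 - s * q * q ^ j \<noteq> 0" for j using h1[rule_format, of "Suc j"] by (simp add: mult_ac)
  have \<rho>y: "s * (s * q) = a * q" using hs by (simp add: power2_eq_square mult_ac)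
  have sqk: "qpoch (s * q) q k \<noteq> 0" for k by (rule qpoch_nonzero[OF ynz])
  have hform: "\<alpha> k * (qpoch s q k * qP 0 (s * q) q k / (qpoch (s * q) q k * qpoch (0 * s) q k))
      = (1 - s) * (-1) ^ k * s ^ k * q ^ (k * (k + 1) div 2) * \<alpha> k / (1 - s * q ^ k)" for k
  proof -
    have r: "qpoch s q k * (1 - s * q ^ k) = (1 - s) * qpoch (s * q) q k" by (rule qpoch_ratio)
    then have r2: "qpoch s q k = (1 - s) * qpoch (s * q) q k / (1 - s * q ^ k)"
      using h1[rule_format, of k] by (simp add: eq_divide_eq)
    show ?thesis unfolding qP0_tri r2 using sqk[of k] h1[rule_format, of k]
      by (simp add: field_simps)
  qed
  have s: "summable (\<lambda>k. \<alpha> k * (qpoch s q k * qP 0 (s * q) q k / (qpoch (s * q) q k * qpoch (0 * s) q k)))"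
    unfolding hform by (rule sumR)
  have "(\<lambda>n. qpoch s q n * qP 0 (s * q) q n * \<beta> n) sums
     (qpoch_inf (s * q) q * qpoch_inf (0 * s) q / (qpoch_inf (a * q) q * qpoch_inf 0 q) *
       (\<Sum>k. \<alpha> k * (qpoch s q k * qP 0 (s * q) q k / (qpoch (s * q) q k * qpoch (0 * s) q k))))"
    by (rule master_bailey[OF q _ \<rho>y anz' ynz _ bp s]) auto
  moreover have "(\<lambda>n. qpoch s q n * qP 0 (s * q) q n * \<beta> n) =
      (\<lambda>n. qpoch s q n * (-1) ^ n * s ^ n * q ^ (n * (n + 1) div 2) * \<beta> n)"
    unfolding qP0_tri by (simp add: mult_ac)
  ultimately show ?thesis unfolding hform by (simp add: sums_iff)
qed

lemma part2:
  fixes a q s r :: complex and \<alpha> \<beta> :: "nat \<Rightarrow> complex"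
  assumes q: "norm q < 1" and hs: "s ^ 2 = a" and hr: "r ^ 2 = q" and bp: "bailey_pair \<alpha> \<beta> a q"
    and anz: "\<forall>j\<ge>1. a * q ^ j \<noteq> 1"
    and sumR: "summable (\<lambda>n. (-1) ^ n * s ^ n * r ^ (n\<^sup>2) * \<alpha> n)"
  shows "(\<Sum>n. qpoch (s * r) q n * (-1) ^ n * s ^ n * r ^ (n\<^sup>2) * \<beta> n)
         = qpoch_inf (s * r) q / qpoch_inf (a * q) q *
           (\<Sum>n. (-1) ^ n * s ^ n * r ^ (n\<^sup>2) * \<alpha> n)"
proof -
  have anz': "1 - a * q * q ^ j \<noteq> 0" for j using anz[rule_format, of "Suc j"] by (auto simp: mult_ac)
  have ynz: "1 - s * r * q ^ j \<noteq> 0" for j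
  proof
    assume "1 - s * r * q ^ j = 0"
    then have "(s * r * q ^ j) ^ 2 = 1" by simp
    moreover have "(s * r * q ^ j) ^ 2 = a * q ^ (2 * j + 1)"
      using hs hr by (simp add: power_mult_distrib power_add power_mult mult_ac)
    ultimately show False using anz[rule_format, of "2 * j + 1"] by simp
  qed
  have \<rho>y: "s * r * (s * r) = a * q" using hs hr by (simp add: power2_eq_square mult_ac)
  have srk: "qpoch (s * r) q k \<noteq> 0" for k by (rule qpoch_nonzero[OF ynz])
  have hform: "\<alpha> k * (qpoch (s * r) q k * qP 0 (s * r) q k / (qpoch (s * r) q k * qpoch (0 * (s * r)) q k))
      = (-1) ^ k * s ^ k * r ^ (k\<^sup>2) * \<alpha> k" for k
    unfolding qP0_sq[OF hr] using srk[of k] by (simp add: field_simps)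
  have s: "summable (\<lambda>k. \<alpha> k * (qpoch (s * r) q k * qP 0 (s * r) q k / (qpoch (s * r) q k * qpoch (0 * (s * r)) q k)))"
    unfolding hform by (rule sumR)
  have "(\<lambda>n. qpoch (s * r) q n * qP 0 (s * r) q n * \<beta> n) sums
     (qpoch_inf (s * r) q * qpoch_inf (0 * (s * r)) q / (qpoch_inf (a * q) q * qpoch_inf 0 q) *
       (\<Sum>k. \<alpha> k * (qpoch (s * r) q k * qP 0 (s * r) q k / (qpoch (s * r) q k * qpoch (0 * (s * r)) q k))))"
    by (rule master_bailey[OF q _ \<rho>y anz' ynz _ bp s]) auto
  moreover have "(\<lambda>n. qpoch (s * r) q n * qP 0 (s * r) q n * \<beta> n) =
      (\<lambda>n. qpoch (s * r) q n * (-1) ^ n * s ^ n * r ^ (n\<^sup>2) * \<beta> n)"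
    unfolding qP0_sq[OF hr] by (simp add: mult_ac)
  ultimately show ?thesis unfolding hform by (simp add: sums_iff)
qed


lemma p4_alg:
  fixes BQ AQ aqi Q2i u1 u2 u3 u4 cq cA cB Ak Bk Ai Bi qi AQi BQi X \<alpha> :: complex
  assumes nz: "BQ \<noteq> 0" "AQ \<noteq> 0" "aqi \<noteq> 0" "Q2i \<noteq> 0" "u1 \<noteq> 0" "u2 \<noteq> 0" "u3 \<noteq> 0" "u4 \<noteq> 0" "cq \<noteq> 0"
    and e: "Ak = cA * AQ / (u1 * u2)" "Bk = cB * BQ / (u3 * u4)" "Ai = cA * AQi" "Bi = cB * BQi" "qi = cq * Q2i"
  shows "BQi * AQi / (aqi * Q2i) * (\<alpha> * (Ak * (X * Bk) / (BQ * AQ)))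
       = Ai * Bi / (qi * aqi) * (cq * X * \<alpha> / (u1 * u2 * u3 * u4))"
  unfolding e using nz by (simp add: field_simps)

lemma ratio2:
  assumes "1 - b * q ^ k \<noteq> 0" "1 - b * q * q ^ k \<noteq> 0"
  shows "qpoch b q k = (1 - b) * (1 - b * q) * qpoch (q ^ 2 * b) q k / ((1 - b * q ^ k) * (1 - b * q * q ^ k))"
proof -
  have r1: "qpoch b q k * (1 - b * q ^ k) = (1 - b) * qpoch (b * q) q k" by (rule qpoch_ratio)
  have r2: "qpoch (b * q) q k * (1 - b * q * q ^ k) = (1 - b * q) * qpoch (b * q * q) q k" by (rule qpoch_ratio)
  have e: "b * q * q = q ^ 2 * b" by (simp add: power2_eq_square mult_ac)
  have r1': "qpoch b q k = (1 - b) * qpoch (b * q) q k / (1 - b * q ^ k)"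
    using r1 assms(1) by (simp add: eq_divide_eq)
  have r2': "qpoch (b * q) q k = (1 - b * q) * qpoch (q ^ 2 * b) q k / (1 - b * q * q ^ k)"
    using r2 assms(2) unfolding e by (simp add: eq_divide_eq)
  show ?thesis unfolding r1' r2' by (simp add: mult_ac)
qed

lemma ratio2_inf:
  assumes "norm q < 1"
  shows "qpoch_inf b q = (1 - b) * (1 - b * q) * qpoch_inf (q ^ 2 * b) q"
proof -
  have e: "b * q * q = q ^ 2 * b" by (simp add: power2_eq_square mult_ac)
  show ?thesis using qpoch_inf_shift[OF assms, of b] qpoch_inf_shift[OF assms, of "b * q"] unfolding e by simp
qed


lemma norm_q2: "norm (q::complex) < 1 \<Longrightarrow> norm (q ^ 2) < 1"
  by (simp add: norm_power power_less_one_iff)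

lemma part4:
  fixes a q s r z :: complex and \<alpha> \<beta> :: "nat \<Rightarrow> complex"
  assumes q: "norm q < 1" and hq0: "q \<noteq> 0" and hs: "s ^ 2 = a" and hr: "r ^ 2 = q"
    and bp: "bailey_pair \<alpha> \<beta> a q" and anz: "\<forall>j\<ge>1. a * q ^ j \<noteq> 1" and z: "z \<noteq> 0"
    and hD: "\<forall>n. (1 - z * s * q ^ n / r) * (1 - z * s * q ^ n * r) * (1 - s * q ^ n / (z * r)) * (1 - s * q ^ n * r / z) \<noteq> 0"
    and sumR: "summable (\<lambda>n. (1 - q) * q ^ (2 * n) * \<alpha> n /
            ((1 - z * s * q ^ n / r) * (1 - z * s * q ^ n * r) * (1 - s * q ^ n / (z * r)) * (1 - s * q ^ n * r / z)))"
  shows "(\<Sum>n. qpoch (z * s / r) q n * qpoch (s / (z * r)) q n * q ^ (2 * n) * \<beta> n)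
         = qpoch_inf (z * s / r) q * qpoch_inf (s / (z * r)) q / (qpoch_inf q q * qpoch_inf (a * q) q) *
           (\<Sum>n. (1 - q) * q ^ (2 * n) * \<alpha> n /
            ((1 - z * s * q ^ n / r) * (1 - z * s * q ^ n * r) * (1 - s * q ^ n / (z * r)) * (1 - s * q ^ n * r / z)))"
proof -
  define A where "A = z * s / r"
  define B where "B = s / (z * r)"
  have r0: "r \<noteq> 0" using hr hq0 by auto
  have qrr: "q = r * r" using hr by (simp add: power2_eq_square)
  have hA1: "z * s * q ^ n / r = A * q ^ n" for n unfolding A_def by simp
  have hA2: "z * s * q ^ n * r = A * q * q ^ n" for n unfolding A_def qrr using r0 by (simp add: field_simps)
  have hB1: "s * q ^ n / (z * r) = B * q ^ n" for n unfolding B_def by simp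
  have hB2: "s * q ^ n * r / z = B * q * q ^ n" for n unfolding B_def qrr using r0 z by (simp add: field_simps)
  have f1: "1 - A * q ^ n \<noteq> 0" for n using hD[rule_format, of n] unfolding hA1 by auto
  have f2: "1 - A * q * q ^ n \<noteq> 0" for n using hD[rule_format, of n] unfolding hA2 by auto
  have f3: "1 - B * q ^ n \<noteq> 0" for n using hD[rule_format, of n] unfolding hB1 by auto
  have f4: "1 - B * q * q ^ n \<noteq> 0" for n using hD[rule_format, of n] unfolding hB2 by auto
  have anz': "1 - a * q * q ^ j \<noteq> 0" for j using anz[rule_format, of "Suc j"] by (auto simp: mult_ac)
  have \<rho>y: "A * (q ^ 2 * B) = a * q"
  proof -
    have "A * (q ^ 2 * B) = s ^ 2 * q ^ 2 / r ^ 2" unfolding A_def B_def using z r0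
      by (simp add: field_simps power2_eq_square)
    also have "\<dots> = a * q" using hs hr hq0 by (simp add: power2_eq_square)
    finally show ?thesis .
  qed
  have ynz: "1 - q ^ 2 * B * q ^ j \<noteq> 0" for j
    using f4[of "Suc j"] by (simp add: power2_eq_square mult_ac)
  have x\<rho>nz: "1 - q ^ 2 * A * q ^ j \<noteq> 0" for j
    using f2[of "Suc j"] by (simp add: power2_eq_square mult_ac)
  have x: "norm (q ^ 2) < 1" by (rule norm_q2[OF q])
  define Cst where "Cst = qpoch_inf (q ^ 2 * B) q * qpoch_inf (q ^ 2 * A) q / (qpoch_inf (a * q) q * qpoch_inf (q ^ 2) q)"
  define K' where "K' = qpoch_inf A q * qpoch_inf B q / (qpoch_inf q q * qpoch_inf (a * q) q)"
  define h where "h k = qpoch A q k * qP (q ^ 2) (q ^ 2 * B) q k / (qpoch (q ^ 2 * B) q k * qpoch (q ^ 2 * A) q k)" for k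
  define g where "g n = (1 - q) * q ^ (2 * n) * \<alpha> n /
            ((1 - z * s * q ^ n / r) * (1 - z * s * q ^ n * r) * (1 - s * q ^ n / (z * r)) * (1 - s * q ^ n * r / z))" for n
  have Cnz: "Cst \<noteq> 0"
    unfolding Cst_def using qpoch_inf_nonzero[OF q ynz] qpoch_inf_nonzero[OF q x\<rho>nz]
      qpoch_inf_nonzero[OF q anz'] qpoch_inf_nonzero[OF q x_nonzero[OF q x]] by (simp add: mult_ac)
  have pw: "Cst * (\<alpha> k * h k) = K' * g k" for k
  proof -
    have e1: "qP (q ^ 2) (q ^ 2 * B) q k = q ^ (2 * k) * qpoch B q k"
      unfolding qP_scale by (simp add: power_mult)
    show ?thesis unfolding Cst_def K'_def h_def g_def e1 hA1 hA2 hB1 hB2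
    proof (rule p4_alg[where cA = "(1 - A) * (1 - A * q)" and cB = "(1 - B) * (1 - B * q)"])
      show "qpoch (q ^ 2 * B) q k \<noteq> 0" by (rule qpoch_nonzero[OF ynz])
      show "qpoch (q ^ 2 * A) q k \<noteq> 0" by (rule qpoch_nonzero[OF x\<rho>nz])
      show "qpoch_inf (a * q) q \<noteq> 0" by (rule qpoch_inf_nonzero[OF q anz'])
      show "qpoch_inf (q ^ 2) q \<noteq> 0" by (rule qpoch_inf_nonzero[OF q x_nonzero[OF q x]])
      show "1 - A * q ^ k \<noteq> 0" "1 - A * q * q ^ k \<noteq> 0" "1 - B * q ^ k \<noteq> 0" "1 - B * q * q ^ k \<noteq> 0"
        by (rule f1 f2 f3 f4)+
      show "1 - q \<noteq> 0" using q by auto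
      show "qpoch A q k = (1 - A) * (1 - A * q) * qpoch (q ^ 2 * A) q k / ((1 - A * q ^ k) * (1 - A * q * q ^ k))"
        by (rule ratio2[OF f1 f2])
      show "qpoch B q k = (1 - B) * (1 - B * q) * qpoch (q ^ 2 * B) q k / ((1 - B * q ^ k) * (1 - B * q * q ^ k))"
        by (rule ratio2[OF f3 f4])
      show "qpoch_inf A q = (1 - A) * (1 - A * q) * qpoch_inf (q ^ 2 * A) q" by (rule ratio2_inf[OF q])
      show "qpoch_inf B q = (1 - B) * (1 - B * q) * qpoch_inf (q ^ 2 * B) q" by (rule ratio2_inf[OF q])
      show "qpoch_inf q q = (1 - q) * qpoch_inf (q ^ 2) q"
        using qpoch_inf_shift[OF q, of q] by (simp add: power2_eq_square)
    qed
  qed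
  have hfun: "(\<lambda>k. \<alpha> k * h k) = (\<lambda>k. K' / Cst * g k)"
  proof
    fix k show "\<alpha> k * h k = K' / Cst * g k" using pw[of k] Cnz by (simp add: field_simps)
  qed
  have sg: "summable g" unfolding g_def by (rule sumR)
  have s: "summable (\<lambda>k. \<alpha> k * h k)" unfolding hfun by (rule summable_mult[OF sg])
  have "(\<lambda>n. qpoch A q n * qP (q ^ 2) (q ^ 2 * B) q n * \<beta> n) sums (Cst * (\<Sum>k. \<alpha> k * h k))"
    using master_bailey[OF q x \<rho>y anz' ynz x\<rho>nz bp] s unfolding Cst_def h_def by simp
  moreover have "Cst * (\<Sum>k. \<alpha> k * h k) = K' * suminf g"
  proof -
    have "(\<Sum>k. K' / Cst * g k) = K' / Cst * suminf g" by (rule suminf_mult[OF sg])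
    then show ?thesis unfolding hfun using Cnz by simp
  qed
  moreover have "(\<lambda>n. qpoch A q n * qP (q ^ 2) (q ^ 2 * B) q n * \<beta> n) =
     (\<lambda>n. qpoch (z * s / r) q n * qpoch (s / (z * r)) q n * q ^ (2 * n) * \<beta> n)"
  proof -
    have pq: "(q ^ 2) ^ n = q ^ (2 * n)" for n by (simp add: power_mult)
    show ?thesis unfolding qP_scale A_def B_def pq by (simp add: mult_ac)
  qed
  ultimately show ?thesis unfolding K'_def g_def A_def B_def by (simp add: sums_iff)
qed


lemma p3_alg:
  fixes BQ AQ1 aqi qi u1 u2 u3 u4 cA cB cBq Ak Bqk Ai Bi AQ1i BQi X :: complex
  assumes nz: "BQ \<noteq> 0" "AQ1 \<noteq> 0" "aqi \<noteq> 0" "qi \<noteq> 0" "u1 \<noteq> 0" "u2 \<noteq> 0" "u3 \<noteq> 0" "u4 \<noteq> 0"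
    and e: "Ak = cA * AQ1 / u1" "Bqk = cBq * BQ / u4" "Ai = cA * AQ1i" "Bi = cB * cBq * BQi"
  shows "cB * (BQi * AQ1i / (aqi * qi) * (Ak * (X * Bqk) / (BQ * AQ1)))
       = Ai * Bi / (qi * aqi) * (X * (u2 * u3) / (u1 * u2 * u3 * u4))"
  unfolding e using nz by (simp add: field_simps)

lemma part3:
  fixes a q s r z :: complex and \<alpha> \<beta> :: "nat \<Rightarrow> complex"
  assumes q: "norm q < 1" and hq0: "q \<noteq> 0" and hs: "s ^ 2 = a" and hr: "r ^ 2 = q"
    and bp: "bailey_pair \<alpha> \<beta> a q" and anz: "\<forall>j\<ge>1. a * q ^ j \<noteq> 1" and z: "z \<noteq> 0"
    and hD: "\<forall>n. (1 - z * s * q ^ n / r) * (1 - z * s * q ^ n * r) * (1 - s * q ^ n / (z * r)) * (1 - s * q ^ n * r / z) \<noteq> 0"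
    and sumR: "summable (\<lambda>n. (1 - (z + 1 / z) * s * q ^ n * r + a * q ^ (2 * n)) * q ^ n * \<alpha> n /
            ((1 - z * s * q ^ n / r) * (1 - z * s * q ^ n * r) * (1 - s * q ^ n / (z * r)) * (1 - s * q ^ n * r / z)))"
  shows "(\<Sum>n. qpoch (z * s / r) q n * qpoch (s / (z * r)) q n * q ^ n * \<beta> n)
         = qpoch_inf (z * s / r) q * qpoch_inf (s / (z * r)) q / (qpoch_inf q q * qpoch_inf (a * q) q) *
           (\<Sum>n. (1 - (z + 1 / z) * s * q ^ n * r + a * q ^ (2 * n)) * q ^ n * \<alpha> n /
            ((1 - z * s * q ^ n / r) * (1 - z * s * q ^ n * r) * (1 - s * q ^ n / (z * r)) * (1 - s * q ^ n * r / z)))"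
proof -
  define A where "A = z * s / r"
  define B where "B = s / (z * r)"
  have r0: "r \<noteq> 0" using hr hq0 by auto
  have qrr: "q = r * r" using hr by (simp add: power2_eq_square)
  have hA1: "z * s * q ^ n / r = A * q ^ n" for n unfolding A_def by simp
  have hA2: "z * s * q ^ n * r = A * q * q ^ n" for n unfolding A_def qrr using r0 by (simp add: field_simps)
  have hB1: "s * q ^ n / (z * r) = B * q ^ n" for n unfolding B_def by simp
  have hB2: "s * q ^ n * r / z = B * q * q ^ n" for n unfolding B_def qrr using r0 z by (simp add: field_simps)
  have f1: "1 - A * q ^ n \<noteq> 0" for n using hD[rule_format, of n] unfolding hA1 by auto
  have f2: "1 - A * q * q ^ n \<noteq> 0" for n using hD[rule_format, of n] unfolding hA2 by auto
  have f3: "1 - B * q ^ n \<noteq> 0" for n using hD[rule_format, of n] unfolding hB1 by auto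
  have f4: "1 - B * q * q ^ n \<noteq> 0" for n using hD[rule_format, of n] unfolding hB2 by auto
  have anz': "1 - a * q * q ^ j \<noteq> 0" for j using anz[rule_format, of "Suc j"] by (auto simp: mult_ac)
  have \<rho>y: "A * (q ^ 2 * B) = a * q"
  proof -
    have "A * (q ^ 2 * B) = s ^ 2 * q ^ 2 / r ^ 2" unfolding A_def B_def using z r0
      by (simp add: field_simps power2_eq_square)
    also have "\<dots> = a * q" using hs hr hq0 by (simp add: power2_eq_square)
    finally show ?thesis .
  qed
  have ynz: "1 - q ^ 2 * B * q ^ j \<noteq> 0" for j
    using f4[of "Suc j"] by (simp add: power2_eq_square mult_ac)
  have x\<rho>nz2: "1 - q ^ 2 * A * q ^ j \<noteq> 0" for j
    using f2[of "Suc j"] by (simp add: power2_eq_square mult_ac)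
  have x\<rho>nz1: "1 - q * A * q ^ j \<noteq> 0" for j
    using f2[of j] by (simp add: mult_ac)
  have x2: "norm (q ^ 2) < 1" by (rule norm_q2[OF q])
  define D where "D n = (1 - z * s * q ^ n / r) * (1 - z * s * q ^ n * r) * (1 - s * q ^ n / (z * r)) * (1 - s * q ^ n * r / z)" for n
  define num where "num n = 1 - (z + 1 / z) * s * q ^ n * r + a * q ^ (2 * n)" for n
  define K' where "K' = qpoch_inf A q * qpoch_inf B q / (qpoch_inf q q * qpoch_inf (a * q) q)"
  define Cst1 where "Cst1 = qpoch_inf (q ^ 2 * B) q * qpoch_inf (q * A) q / (qpoch_inf (a * q) q * qpoch_inf q q)"
  define h1 where "h1 k = qpoch A q k * qP q (q ^ 2 * B) q k / (qpoch (q ^ 2 * B) q k * qpoch (q * A) q k)" for k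
  define Cst2 where "Cst2 = qpoch_inf (q ^ 2 * B) q * qpoch_inf (q ^ 2 * A) q / (qpoch_inf (a * q) q * qpoch_inf (q ^ 2) q)"
  define h2 where "h2 k = qpoch A q k * qP (q ^ 2) (q ^ 2 * B) q k / (qpoch (q ^ 2 * B) q k * qpoch (q ^ 2 * A) q k)" for k
  define g where "g n = num n * q ^ n * \<alpha> n / D n" for n
  have Dnz: "D n \<noteq> 0" for n unfolding D_def using hD by auto
  have DAB: "D n = (1 - A * q ^ n) * (1 - A * q * q ^ n) * (1 - B * q ^ n) * (1 - B * q * q ^ n)" for n
    unfolding D_def hA1 hA2 hB1 hB2 ..
  have aqinz: "qpoch_inf (a * q) q \<noteq> 0" by (rule qpoch_inf_nonzero[OF q anz'])
  have qinz: "qpoch_inf q q \<noteq> 0" by (rule qpoch_inf_nonzero[OF q qq_nonzero[OF q]])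
  have q2inz: "qpoch_inf (q ^ 2) q \<noteq> 0" by (rule qpoch_inf_nonzero[OF q x_nonzero[OF q x2]])
  have BQnz: "qpoch (q ^ 2 * B) q k \<noteq> 0" for k by (rule qpoch_nonzero[OF ynz])
  have C1nz: "Cst1 \<noteq> 0"
    unfolding Cst1_def using qpoch_inf_nonzero[OF q ynz] qpoch_inf_nonzero[OF q x\<rho>nz1] aqinz qinz by simp
  have C2nz: "Cst2 \<noteq> 0"
    unfolding Cst2_def using qpoch_inf_nonzero[OF q ynz] qpoch_inf_nonzero[OF q x\<rho>nz2] aqinz q2inz by simp
  have P1: "(1 - B) * (Cst1 * h1 k) = K' * (q ^ k * ((1 - A * q * q ^ k) * (1 - B * q ^ k)) / D k)" for k
  proof -
    have e1: "qP q (q ^ 2 * B) q k = q ^ k * qpoch (q * B) q k"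
      using qP_scale[of q "q * B" q k] by (simp add: power2_eq_square mult_ac)
    have rA: "qpoch A q k = (1 - A) * qpoch (q * A) q k / (1 - A * q ^ k)"
      using qpoch_ratio[of A q k] f1[of k] by (simp add: eq_divide_eq mult_ac)
    have rB: "qpoch (q * B) q k = (1 - q * B) * qpoch (q ^ 2 * B) q k / (1 - B * q * q ^ k)"
    proof -
      have e: "q * B * q = q ^ 2 * B" by (simp add: power2_eq_square mult_ac)
      have r: "qpoch (q * B) q k * (1 - q * B * q ^ k) = (1 - q * B) * qpoch (q ^ 2 * B) q k"
        using qpoch_ratio[of "q * B" q k] unfolding e .
      have f: "1 - q * B * q ^ k \<noteq> 0" using f4[of k] by (simp add: mult_ac)
      have ee: "B * q * q ^ k = q * B * q ^ k" by (simp add: mult.commute)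
      show ?thesis unfolding ee using r f by (simp add: eq_divide_eq)
    qed
    have iA: "qpoch_inf A q = (1 - A) * qpoch_inf (q * A) q" using qpoch_inf_shift[OF q, of A] by (simp add: mult_ac)
    have iB: "qpoch_inf B q = (1 - B) * (1 - q * B) * qpoch_inf (q ^ 2 * B) q" using ratio2_inf[OF q, of B] by (simp add: mult_ac)
    show ?thesis unfolding Cst1_def h1_def K'_def DAB e1
    proof (rule p3_alg)
      show "qpoch (q ^ 2 * B) q k \<noteq> 0" by (rule BQnz)
      show "qpoch (q * A) q k \<noteq> 0" by (rule qpoch_nonzero[OF x\<rho>nz1])
    qed (use aqinz qinz f1 f2 f3 f4 rA rB iA iB in auto)
  qed
  have P2: "Cst2 * h2 k = K' * ((1 - q) * q ^ (2 * k) / D k)" for k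
  proof -
    have e1: "qP (q ^ 2) (q ^ 2 * B) q k = q ^ (2 * k) * qpoch B q k"
      unfolding qP_scale by (simp add: power_mult)
    have "Cst2 * (1 * h2 k) = K' * ((1 - q) * q ^ (2 * k) * 1 / D k)"
      unfolding Cst2_def K'_def h2_def DAB e1
    proof (rule p4_alg[where cA = "(1 - A) * (1 - A * q)" and cB = "(1 - B) * (1 - B * q)"])
      show "qpoch (q ^ 2 * B) q k \<noteq> 0" by (rule BQnz)
      show "qpoch (q ^ 2 * A) q k \<noteq> 0" by (rule qpoch_nonzero[OF x\<rho>nz2])
      show "1 - q \<noteq> 0" using q by auto
      show "qpoch A q k = (1 - A) * (1 - A * q) * qpoch (q ^ 2 * A) q k / ((1 - A * q ^ k) * (1 - A * q * q ^ k))"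
        by (rule ratio2[OF f1 f2])
      show "qpoch B q k = (1 - B) * (1 - B * q) * qpoch (q ^ 2 * B) q k / ((1 - B * q ^ k) * (1 - B * q * q ^ k))"
        by (rule ratio2[OF f3 f4])
      show "qpoch_inf A q = (1 - A) * (1 - A * q) * qpoch_inf (q ^ 2 * A) q" by (rule ratio2_inf[OF q])
      show "qpoch_inf B q = (1 - B) * (1 - B * q) * qpoch_inf (q ^ 2 * B) q" by (rule ratio2_inf[OF q])
      show "qpoch_inf q q = (1 - q) * qpoch_inf (q ^ 2) q"
        using qpoch_inf_shift[OF q, of q] by (simp add: power2_eq_square)
    qed (use aqinz q2inz f1 f2 f3 f4 in auto)
    then show ?thesis by simp
  qed
  have numeq: "num k = (1 - A * q * q ^ k) * (1 - B * q ^ k) + B * (1 - q) * q ^ k" for k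
  proof -
    have "num k = 1 - (z + 1 / z) * s * q ^ k * r + s ^ 2 * q ^ (2 * k)" unfolding num_def hs ..
    also have "\<dots> = (1 - A * q * q ^ k) * (1 - B * q ^ k) + B * (1 - q) * q ^ k"
    proof -
      have rr: "r ^ (k * 2) = r ^ k * r ^ k" by (simp add: mult_2_right power_add)
      show ?thesis unfolding A_def B_def qrr using z r0
        by (simp add: field_simps power2_eq_square power_mult_distrib mult_2 power_add rr)
    qed
    finally show ?thesis .
  qed
  have comb: "(1 - B) * (\<alpha> k * (Cst1 * h1 k)) + B * (\<alpha> k * (Cst2 * h2 k)) = K' * g k" for k
  proof -
    have "(1 - B) * (\<alpha> k * (Cst1 * h1 k)) + B * (\<alpha> k * (Cst2 * h2 k))
        = \<alpha> k * ((1 - B) * (Cst1 * h1 k) + B * (Cst2 * h2 k))" by (simp add: algebra_simps)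
    also have "\<dots> = \<alpha> k * (K' * (q ^ k * ((1 - A * q * q ^ k) * (1 - B * q ^ k)) / D k) + B * (K' * ((1 - q) * q ^ (2 * k) / D k)))"
      unfolding P1 P2 ..
    also have "\<dots> = K' * g k"
    proof -
      have qq2: "q ^ (2 * k) = q ^ k * q ^ k" by (simp add: mult_2 power_add)
      show ?thesis unfolding g_def numeq qq2 using Dnz[of k] by (simp add: field_simps)
    qed
    finally show ?thesis .
  qed
  have sg: "summable g" using sumR unfolding g_def num_def D_def .
  have numlim: "num \<longlonglongrightarrow> 1"
  proof -
    have l1: "(\<lambda>n. q ^ n) \<longlonglongrightarrow> 0" by (rule LIMSEQ_power_zero[OF q])
    have l2: "(\<lambda>n. q ^ (2 * n)) \<longlonglongrightarrow> 0"
      unfolding power_mult by (rule LIMSEQ_power_zero[OF x2])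
    have "(\<lambda>n. 1 - (z + 1 / z) * s * q ^ n * r + a * q ^ (2 * n)) \<longlonglongrightarrow> 1 - (z + 1 / z) * s * 0 * r + a * 0"
      by (intro tendsto_intros l1 l2)
    then show ?thesis unfolding num_def by simp
  qed
  obtain N where N: "\<And>k. k \<ge> N \<Longrightarrow> norm (num k - 1) < 1 / 2"
  proof -
    have "eventually (\<lambda>k. dist (num k) 1 < 1 / 2) sequentially"
      by (rule tendstoD[OF numlim]) simp
    then show ?thesis using that by (auto simp: eventually_sequentially dist_norm)
  qed
  have numbig: "1 / 2 \<le> norm (num k)" if "k \<ge> N" for k
  proof -
    have "norm (1 - num k) < 1 / 2" using N[OF that] by (simp add: norm_minus_commute)
    moreover have "norm (1::complex) - norm (num k) \<le> norm (1 - num k)" by (rule norm_triangle_ineq2)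
    ultimately show ?thesis by simp
  qed
  obtain G where G: "G > 0" "\<And>k. norm (g k) \<le> G"
    using convergent_imp_Bseq[of g] summable_LIMSEQ_zero[OF sg] by (auto simp: Bseq_def convergent_def)
  have rel: "\<alpha> k * (Cst2 * h2 k) = K' * (1 - q) * q ^ k * g k / num k" if "num k \<noteq> 0" for k
  proof -
    have qq2: "q ^ (2 * k) = q ^ k * q ^ k" by (simp add: mult_2 power_add)
    show ?thesis unfolding P2 g_def qq2 using that Dnz[of k] by (simp add: field_simps)
  qed
  have s2: "summable (\<lambda>k. \<alpha> k * (Cst2 * h2 k))"
  proof (rule summable_comparison_test'[where g="\<lambda>k. (2 * norm K' * norm (1 - q) * G) * norm q ^ k" and N=N])
    show "summable (\<lambda>k. (2 * norm K' * norm (1 - q) * G) * norm q ^ k)"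
      using q by (intro summable_mult summable_geometric) auto
  next
    fix k assume k: "N \<le> k"
    have nz: "num k \<noteq> 0" using numbig[OF k] by auto
    have "norm (\<alpha> k * (Cst2 * h2 k)) = norm K' * norm (1 - q) * norm q ^ k * norm (g k) / norm (num k)"
      unfolding rel[OF nz] by (simp add: norm_mult norm_divide norm_power)
    also have "\<dots> \<le> norm K' * norm (1 - q) * norm q ^ k * G / (1 / 2)"
      using G(2)[of k] numbig[OF k] G(1)
      by (intro frac_le mult_left_mono) auto
    also have "\<dots> = (2 * norm K' * norm (1 - q) * G) * norm q ^ k" by simp
    finally show "norm (\<alpha> k * (Cst2 * h2 k)) \<le> (2 * norm K' * norm (1 - q) * G) * norm q ^ k" .
  qed
  have B1: "1 - B \<noteq> 0" using f3[of 0] by simp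
  have s1: "summable (\<lambda>k. \<alpha> k * (Cst1 * h1 k))"
  proof -
    have "(\<lambda>k. \<alpha> k * (Cst1 * h1 k)) = (\<lambda>k. (K' * g k - B * (\<alpha> k * (Cst2 * h2 k))) / (1 - B))"
    proof
      fix k show "\<alpha> k * (Cst1 * h1 k) = (K' * g k - B * (\<alpha> k * (Cst2 * h2 k))) / (1 - B)"
        using comb[of k] B1 by (simp add: field_simps)
    qed
    moreover have "summable (\<lambda>k. (K' * g k - B * (\<alpha> k * (Cst2 * h2 k))) / (1 - B))"
      by (intro summable_divide summable_diff summable_mult sg s2)
    ultimately show ?thesis by simp
  qed
  have s1': "summable (\<lambda>k. \<alpha> k * h1 k)"
  proof -
    have "(\<lambda>k. \<alpha> k * h1 k) = (\<lambda>k. (\<alpha> k * (Cst1 * h1 k)) / Cst1)" using C1nz by (auto simp: fun_eq_iff)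
    then show ?thesis using summable_divide[OF s1, of Cst1] by simp
  qed
  have s2': "summable (\<lambda>k. \<alpha> k * h2 k)"
  proof -
    have "(\<lambda>k. \<alpha> k * h2 k) = (\<lambda>k. (\<alpha> k * (Cst2 * h2 k)) / Cst2)" using C2nz by (auto simp: fun_eq_iff)
    then show ?thesis using summable_divide[OF s2, of Cst2] by simp
  qed
  have S1: "(\<lambda>n. qpoch A q n * qP q (q ^ 2 * B) q n * \<beta> n) sums (\<Sum>k. \<alpha> k * (Cst1 * h1 k))"
  proof -
    have "(\<lambda>n. qpoch A q n * qP q (q ^ 2 * B) q n * \<beta> n) sums (Cst1 * (\<Sum>k. \<alpha> k * h1 k))"
      using master_bailey[OF q q \<rho>y anz' ynz x\<rho>nz1 bp] s1' unfolding Cst1_def h1_def by simp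
    moreover have "Cst1 * (\<Sum>k. \<alpha> k * h1 k) = (\<Sum>k. \<alpha> k * (Cst1 * h1 k))"
      using suminf_mult[OF s1', of Cst1] by (simp add: mult_ac)
    ultimately show ?thesis by simp
  qed
  have S2: "(\<lambda>n. qpoch A q n * qP (q ^ 2) (q ^ 2 * B) q n * \<beta> n) sums (\<Sum>k. \<alpha> k * (Cst2 * h2 k))"
  proof -
    have "(\<lambda>n. qpoch A q n * qP (q ^ 2) (q ^ 2 * B) q n * \<beta> n) sums (Cst2 * (\<Sum>k. \<alpha> k * h2 k))"
      using master_bailey[OF q x2 \<rho>y anz' ynz x\<rho>nz2 bp] s2' unfolding Cst2_def h2_def by simp
    moreover have "Cst2 * (\<Sum>k. \<alpha> k * h2 k) = (\<Sum>k. \<alpha> k * (Cst2 * h2 k))"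
      using suminf_mult[OF s2', of Cst2] by (simp add: mult_ac)
    ultimately show ?thesis by simp
  qed
  have S: "(\<lambda>n. (1 - B) * (qpoch A q n * qP q (q ^ 2 * B) q n * \<beta> n) + B * (qpoch A q n * qP (q ^ 2) (q ^ 2 * B) q n * \<beta> n))
      sums ((1 - B) * (\<Sum>k. \<alpha> k * (Cst1 * h1 k)) + B * (\<Sum>k. \<alpha> k * (Cst2 * h2 k)))"
    by (intro sums_add sums_mult S1 S2)
  have lhs: "(1 - B) * (qpoch A q n * qP q (q ^ 2 * B) q n * \<beta> n) + B * (qpoch A q n * qP (q ^ 2) (q ^ 2 * B) q n * \<beta> n)
      = qpoch (z * s / r) q n * qpoch (s / (z * r)) q n * q ^ n * \<beta> n" for n
  proof -
    have e1: "qP q (q ^ 2 * B) q n = q ^ n * qpoch (q * B) q n"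
      using qP_scale[of q "q * B" q n] by (simp add: power2_eq_square mult_ac)
    have e2: "qP (q ^ 2) (q ^ 2 * B) q n = q ^ n * q ^ n * qpoch B q n"
      unfolding qP_scale by (simp add: power_mult_distrib power2_eq_square)
    have r: "qpoch B q n * (1 - B * q ^ n) = (1 - B) * qpoch (B * q) q n" by (rule qpoch_ratio)
    have c1: "(1 - B) * (qpoch A q n * (q ^ n * qpoch (q * B) q n) * \<beta> n) + B * (qpoch A q n * (q ^ n * q ^ n * qpoch B q n) * \<beta> n)
        = qpoch A q n * q ^ n * \<beta> n * ((1 - B) * qpoch (B * q) q n + B * q ^ n * qpoch B q n)"
      by (simp add: algebra_simps)
    have c2: "(1 - B) * qpoch (B * q) q n + B * q ^ n * qpoch B q n = qpoch B q n"
      using r by (simp add: algebra_simps)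
    show ?thesis unfolding e1 e2 c1 c2 unfolding A_def B_def by (simp add: mult_ac)
  qed
  have val: "(1 - B) * (\<Sum>k. \<alpha> k * (Cst1 * h1 k)) + B * (\<Sum>k. \<alpha> k * (Cst2 * h2 k)) = K' * suminf g"
  proof -
    have "(1 - B) * (\<Sum>k. \<alpha> k * (Cst1 * h1 k)) + B * (\<Sum>k. \<alpha> k * (Cst2 * h2 k))
        = (\<Sum>k. (1 - B) * (\<alpha> k * (Cst1 * h1 k)) + B * (\<alpha> k * (Cst2 * h2 k)))"
      using suminf_mult[OF s1, of "1 - B"] suminf_mult[OF s2, of B]
        suminf_add[OF summable_mult[OF s1, of "1 - B"] summable_mult[OF s2, of B]] by simp
    also have "\<dots> = (\<Sum>k. K' * g k)" unfolding comb ..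
    also have "\<dots> = K' * suminf g" by (rule suminf_mult[OF sg])
    finally show ?thesis .
  qed
  from S have "(\<lambda>n. qpoch (z * s / r) q n * qpoch (s / (z * r)) q n * q ^ n * \<beta> n) sums (K' * suminf g)"
    unfolding lhs val .
  then show ?thesis unfolding K'_def g_def num_def D_def A_def B_def by (simp add: sums_iff)
qed


lemma qpoch_double: "qpoch z q (2 * n) = qpoch z (q ^ 2) n * qpoch (z * q) (q ^ 2) n"
proof (induction n)
  case (Suc n)
  have e: "2 * Suc n = Suc (Suc (2 * n))" by simp
  show ?case unfolding e qpoch_Suc Suc
    by (simp add: power_mult[symmetric] power_add mult_ac)
qed simp

lemma qpoch_inf_double:
  assumes q: "norm q < 1"
  shows "qpoch_inf z q = qpoch_inf z (q ^ 2) * qpoch_inf (z * q) (q ^ 2)"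
proof -
  have q2: "norm (q ^ 2) < 1" by (rule norm_q2[OF q])
  have "(\<lambda>n. qpoch z q (2 * n)) \<longlonglongrightarrow> qpoch_inf z q"
    by (rule LIMSEQ_subseq_LIMSEQ[OF qpoch_lim[OF q], unfolded o_def]) (simp add: strict_mono_def)
  moreover have "(\<lambda>n. qpoch z q (2 * n)) \<longlonglongrightarrow> qpoch_inf z (q ^ 2) * qpoch_inf (z * q) (q ^ 2)"
    unfolding qpoch_double by (intro tendsto_mult qpoch_lim q2)
  ultimately show ?thesis using LIMSEQ_unique by blast
qed

lemma h7_alg:
  fixes \<alpha> c Y X C d :: complex
  assumes "Y \<noteq> 0" "C \<noteq> 0" "d \<noteq> 0"
  shows "\<alpha> * ((c * Y / d) * (X * C) / (Y * C)) = c * X * \<alpha> / d"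
  using assms by (simp add: field_simps)

lemma part7:
  fixes a q s :: complex and \<alpha> \<beta> :: "nat \<Rightarrow> complex"
  assumes q: "norm q < 1" and hq0: "q \<noteq> 0" and hs: "s ^ 2 = a"
    and bp: "bailey_pair \<alpha> \<beta> a (q ^ 2)" and anz: "\<forall>j\<ge>1. a * q ^ (2 * j) \<noteq> 1"
    and h1: "\<forall>n. 1 + s * q ^ (2 * n) \<noteq> 0"
    and sumR: "summable (\<lambda>n. (1 + s) * q ^ n * \<alpha> n / (1 + s * q ^ (2 * n)))"
  shows "(\<Sum>n. qpoch (- s) q (2 * n) * q ^ n * \<beta> n)
       = qpoch_inf (- s * q) q / (qpoch_inf (a * q ^ 2) (q ^ 2) * qpoch_inf q (q ^ 2)) *
         (\<Sum>n. (1 + s) * q ^ n * \<alpha> n / (1 + s * q ^ (2 * n)))"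
proof -
  define p where "p = q ^ 2"
  have p: "norm p < 1" unfolding p_def by (rule norm_q2[OF q])
  have pj: "p ^ j = q ^ (2 * j)" for j unfolding p_def by (simp add: power_mult)
  have anz': "1 - a * p * p ^ j \<noteq> 0" for j
  proof -
    have "a * p * p ^ j = a * p ^ Suc j" by simp
    also have "\<dots> = a * q ^ (2 * Suc j)" unfolding pj ..
    finally have e: "a * p * p ^ j = a * q ^ (2 * Suc j)" .
    have "a * q ^ (2 * Suc j) \<noteq> 1" using anz[rule_format, of "Suc j"] by simp
    then show ?thesis unfolding e by (metis right_minus_eq)
  qed
  have \<rho>y: "(- s) * (- s * p) = a * p" using hs by (simp add: power2_eq_square)
  have ynz: "1 - (- s * p) * p ^ j \<noteq> 0" for j
  proof -
    have "(- s * p) * p ^ j = - (s * p ^ Suc j)" by (simp add: mult_ac)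
    also have "\<dots> = - (s * q ^ (2 * Suc j))" unfolding pj ..
    finally have e: "(- s * p) * p ^ j = - (s * q ^ (2 * Suc j))" .
    have "1 + s * q ^ (2 * Suc j) \<noteq> 0" using h1 by blast
    then show ?thesis unfolding e by (metis diff_minus_eq_add)
  qed
  have x\<rho>nz: "1 - q * (- s) * p ^ j \<noteq> 0" for j
  proof
    assume h: "1 - q * (- s) * p ^ j = 0"
    have e: "q * (- s) * p ^ j = - (s * q ^ (2 * j + 1))" unfolding pj by (simp add: power_add mult_ac)
    have "s * q ^ (2 * j + 1) = -1" using h unfolding e by (metis add.commute diff_minus_eq_add eq_neg_iff_add_eq_0)
    then have "(s * q ^ (2 * j + 1)) ^ 2 = 1" by simp
    moreover have "(s * q ^ (2 * j + 1)) ^ 2 = a * q ^ (2 * (2 * j + 1))"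
    proof -
      have "(s * q ^ (2 * j + 1)) ^ 2 = s ^ 2 * (q ^ (2 * j + 1)) ^ 2" by (rule power_mult_distrib)
      also have "(q ^ (2 * j + 1)) ^ 2 = q ^ (2 * (2 * j + 1))"
        by (simp only: power_mult[symmetric] mult.commute)
      finally show ?thesis using hs by simp
    qed
    ultimately show False using anz[rule_format, of "2 * j + 1"] by simp
  qed
  have ykz: "qpoch (- s * p) p k \<noteq> 0" for k by (rule qpoch_nonzero[OF ynz])
  have xkz: "qpoch (q * (- s)) p k \<noteq> 0" for k by (rule qpoch_nonzero[OF x\<rho>nz])
  have eP: "qP q (- s * p) p n = q ^ n * qpoch (- s * q) p n" for n
    using qP_scale[of q "- s * q" p n] unfolding p_def by (simp add: power2_eq_square mult_ac)
  have hform: "\<alpha> k * (qpoch (- s) p k * qP q (- s * p) p k / (qpoch (- s * p) p k * qpoch (q * (- s)) p k))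
      = (1 + s) * q ^ k * \<alpha> k / (1 + s * q ^ (2 * k))" for k
  proof -
    have r: "qpoch (- s) p k * (1 - (- s) * p ^ k) = (1 - (- s)) * qpoch (- s * p) p k" by (rule qpoch_ratio)
    have d: "1 + s * q ^ (2 * k) \<noteq> 0" using h1 by auto
    have r2: "qpoch (- s) p k = (1 + s) * qpoch (- s * p) p k / (1 + s * q ^ (2 * k))"
      using r d unfolding pj by (simp add: eq_divide_eq)
    have xq: "qpoch (q * (- s)) p k = qpoch (- s * q) p k" by (simp add: mult.commute)
    show ?thesis unfolding eP r2 xq by (rule h7_alg[OF ykz[of k] xkz[of k, unfolded xq] d])
  qed
  have s: "summable (\<lambda>k. \<alpha> k * (qpoch (- s) p k * qP q (- s * p) p k / (qpoch (- s * p) p k * qpoch (q * (- s)) p k)))"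
    unfolding hform by (rule sumR)
  have bp': "bailey_pair \<alpha> \<beta> a p" using bp unfolding p_def .
  have M: "(\<lambda>n. qpoch (- s) p n * qP q (- s * p) p n * \<beta> n) sums
     (qpoch_inf (- s * p) p * qpoch_inf (q * (- s)) p / (qpoch_inf (a * p) p * qpoch_inf q p) *
       (\<Sum>k. \<alpha> k * (qpoch (- s) p k * qP q (- s * p) p k / (qpoch (- s * p) p k * qpoch (q * (- s)) p k))))"
    by (rule master_bailey[OF p q \<rho>y anz' ynz x\<rho>nz bp' s])
  have L: "(\<lambda>n. qpoch (- s) p n * qP q (- s * p) p n * \<beta> n) = (\<lambda>n. qpoch (- s) q (2 * n) * q ^ n * \<beta> n)"
    unfolding eP qpoch_double unfolding p_def by (simp add: mult_ac)
  have I: "qpoch_inf (- s * p) p * qpoch_inf (q * (- s)) p = qpoch_inf (- s * q) q"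
    unfolding qpoch_inf_double[OF q, of "- s * q"] p_def by (simp add: power2_eq_square mult_ac)
  from M have "(\<lambda>n. qpoch (- s) q (2 * n) * q ^ n * \<beta> n) sums
     (qpoch_inf (- s * q) q / (qpoch_inf (a * p) p * qpoch_inf q p) * (\<Sum>n. (1 + s) * q ^ n * \<alpha> n / (1 + s * q ^ (2 * n))))"
    unfolding L hform I .
  then show ?thesis unfolding p_def by (simp add: sums_iff)
qed


definition omega :: complex where "omega = Complex (-1/2) (sqrt 3 / 2)"

lemma omega_eq: "omega ^ 2 + omega + 1 = 0"
  by (simp add: omega_def complex_eq_iff power2_eq_square)

lemma omega_nz: "omega \<noteq> 0"
  by (simp add: omega_def complex_eq_iff)

lemma omega_inv: "omega + 1 / omega = -1"
proof -
  have e: "omega * omega + omega + 1 = 0" using omega_eq by (simp add: power2_eq_square)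
  have "omega * (-1 - omega) = 1 - (omega * omega + omega + 1)" by (simp add: algebra_simps)
  then have "omega * (-1 - omega) = 1" unfolding e by simp
  then have "inverse omega = -1 - omega" by (rule inverse_unique)
  then show ?thesis by (simp add: divide_inverse)
qed

lemma omega_pair: fixes t :: complex shows "(1 - omega * t) * (1 - t / omega) = 1 + t + t ^ 2"
proof -
  have "(1 - omega * t) * (1 - t / omega) = 1 - (omega + 1 / omega) * t + t * t"
    using omega_nz by (simp add: field_simps)
  then show ?thesis unfolding omega_inv by (simp add: power2_eq_square)
qed

lemma cube_fact: fixes t :: complex shows "(1 - t) * (1 + t + t ^ 2) = 1 - t ^ 3"
  by (simp add: algebra_simps power2_eq_square power3_eq_cube)

lemma qpoch_cube: "qpoch (omega * u) q n * qpoch (u / omega) q n * qpoch u q n = qpoch (u ^ 3) (q ^ 3) n"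
proof (induction n)
  case (Suc n)
  have "(1 - omega * u * q ^ n) * (1 - u / omega * q ^ n) * (1 - u * q ^ n) = 1 - u ^ 3 * (q ^ 3) ^ n"
  proof -
    have "(1 - omega * u * q ^ n) * (1 - u / omega * q ^ n) = 1 + u * q ^ n + (u * q ^ n) ^ 2"
      using omega_pair[of "u * q ^ n"] by (simp add: mult_ac)
    moreover have "(1 + u * q ^ n + (u * q ^ n) ^ 2) * (1 - u * q ^ n) = 1 - (u * q ^ n) ^ 3"
      using cube_fact[of "u * q ^ n"] by (simp add: mult_ac)
    moreover have "(u * q ^ n) ^ 3 = u ^ 3 * (q ^ 3) ^ n" by (simp add: power_mult_distrib power_mult[symmetric] mult.commute)
    ultimately show ?thesis by simp
  qed
  moreover have "qpoch (omega * u) q (Suc n) * qpoch (u / omega) q (Suc n) * qpoch u q (Suc n)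
      = (qpoch (omega * u) q n * qpoch (u / omega) q n * qpoch u q n) *
        ((1 - omega * u * q ^ n) * (1 - u / omega * q ^ n) * (1 - u * q ^ n))"
    by (simp only: qpoch_Suc mult_ac)
  ultimately show ?case unfolding Suc by (simp add: qpoch_Suc)
qed simp

lemma qpoch_inf_cube:
  assumes q: "norm q < 1"
  shows "qpoch_inf (omega * u) q * qpoch_inf (u / omega) q * qpoch_inf u q = qpoch_inf (u ^ 3) (q ^ 3)"
proof -
  have q3: "norm (q ^ 3) < 1" using q by (simp add: norm_power power_less_one_iff)
  have "(\<lambda>n. qpoch (omega * u) q n * qpoch (u / omega) q n * qpoch u q n) \<longlonglongrightarrow>
      qpoch_inf (omega * u) q * qpoch_inf (u / omega) q * qpoch_inf u q"
    by (intro tendsto_mult qpoch_lim q)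
  moreover have "(\<lambda>n. qpoch (omega * u) q n * qpoch (u / omega) q n * qpoch u q n) \<longlonglongrightarrow> qpoch_inf (u ^ 3) (q ^ 3)"
    unfolding qpoch_cube by (rule qpoch_lim[OF q3])
  ultimately show ?thesis using LIMSEQ_unique by blast
qed


lemma cancel2: "a \<noteq> 0 \<Longrightarrow> b \<noteq> 0 \<Longrightarrow> (a * A) * (b * B) / (a * b) = A * (B::complex)"
  by (simp add: field_simps)

lemma Domega:
  fixes s q r :: complex
  assumes h1: "1 - s * q ^ n / r \<noteq> 0" and h2: "(1 - s ^ 3 * q ^ (3 * n) / r ^ 3) * (1 - s ^ 3 * q ^ (3 * n) * r ^ 3) \<noteq> 0"
  shows "(1 - omega * s * q ^ n / r) * (1 - omega * s * q ^ n * r) * (1 - s * q ^ n / (omega * r)) * (1 - s * q ^ n * r / omega)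
         = (1 - s ^ 3 * q ^ (3 * n) / r ^ 3) * (1 - s ^ 3 * q ^ (3 * n) * r ^ 3) / ((1 - s * q ^ n / r) * (1 - s * q ^ n * r))"
    and "1 - s * q ^ n * r \<noteq> 0"
    and "(1 - omega * s * q ^ n / r) * (1 - omega * s * q ^ n * r) * (1 - s * q ^ n / (omega * r)) * (1 - s * q ^ n * r / omega) \<noteq> 0"
proof -
  define x where "x = s * q ^ n / r"
  define y where "y = s * q ^ n * r"
  have ox: "omega * s * q ^ n / r = omega * x" unfolding x_def by (simp add: mult_ac)
  have xo: "s * q ^ n / (omega * r) = x / omega" unfolding x_def by (simp add: mult.commute)
  have oy: "omega * s * q ^ n * r = omega * y" unfolding y_def by (simp add: mult_ac)
  have yo: "s * q ^ n * r / omega = y / omega" unfolding y_def ..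
  have x3: "s ^ 3 * q ^ (3 * n) / r ^ 3 = x ^ 3" unfolding x_def
    by (simp add: power_divide power_mult_distrib power_mult[symmetric] mult.commute)
  have y3: "s ^ 3 * q ^ (3 * n) * r ^ 3 = y ^ 3" unfolding y_def
    by (simp add: power_mult_distrib power_mult[symmetric] mult.commute)
  have hx: "1 - x \<noteq> 0" using h1 unfolding x_def .
  have c1: "(1 - x) * (1 + x + x ^ 2) = 1 - x ^ 3" by (rule cube_fact)
  have c2: "(1 - y) * (1 + y + y ^ 2) = 1 - y ^ 3" by (rule cube_fact)
  have h2': "(1 - x ^ 3) * (1 - y ^ 3) \<noteq> 0" using h2 unfolding x3 y3 .
  show hy: "1 - s * q ^ n * r \<noteq> 0" using h2' c2 unfolding y_def[symmetric] by auto
  have D: "(1 - omega * s * q ^ n / r) * (1 - omega * s * q ^ n * r) * (1 - s * q ^ n / (omega * r)) * (1 - s * q ^ n * r / omega)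
      = (1 + x + x ^ 2) * (1 + y + y ^ 2)"
    unfolding ox oy xo yo omega_pair[of x, symmetric] omega_pair[of y, symmetric] by (simp add: mult_ac)
  show "(1 - omega * s * q ^ n / r) * (1 - omega * s * q ^ n * r) * (1 - s * q ^ n / (omega * r)) * (1 - s * q ^ n * r / omega)
         = (1 - s ^ 3 * q ^ (3 * n) / r ^ 3) * (1 - s ^ 3 * q ^ (3 * n) * r ^ 3) / ((1 - s * q ^ n / r) * (1 - s * q ^ n * r))"
  proof -
    have hy': "1 - y \<noteq> 0" using hy unfolding y_def .
    have "(1 - x ^ 3) * (1 - y ^ 3) / ((1 - x) * (1 - y)) = (1 + x + x ^ 2) * (1 + y + y ^ 2)"
      unfolding c1[symmetric] c2[symmetric] by (rule cancel2[OF hx hy'])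
    then show ?thesis unfolding D x3 y3 unfolding x_def[symmetric] y_def[symmetric] by (rule sym)
  qed
  show "(1 - omega * s * q ^ n / r) * (1 - omega * s * q ^ n * r) * (1 - s * q ^ n / (omega * r)) * (1 - s * q ^ n * r / omega) \<noteq> 0"
    unfolding D using h2' c1 c2 by auto
qed


lemma alg_div3: "E \<noteq> 0 \<Longrightarrow> u \<noteq> 0 \<Longrightarrow> v \<noteq> 0 \<Longrightarrow> N * X * \<alpha> / (E / (u * v)) = (u * v * N) * X * \<alpha> / (E::complex)"
  by (simp add: field_simps)

lemma alg_cube: "P \<noteq> 0 \<Longrightarrow> a * b * P = T \<Longrightarrow> a * b * X * \<beta> = T * X * \<beta> / (P::complex)"
  by (simp add: field_simps)

lemma omega_facts:
  fixes s q r :: complex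
  assumes q: "norm q < 1" and hr: "r ^ 2 = q" and hq0: "q \<noteq> 0"
    and h56: "\<forall>n. 1 - s * q ^ n / r \<noteq> 0 \<and> (1 - s ^ 3 * q ^ (3 * n) / r ^ 3) * (1 - s ^ 3 * q ^ (3 * n) * r ^ 3) \<noteq> 0"
  shows "\<forall>n. (1 - omega * s * q ^ n / r) * (1 - omega * s * q ^ n * r) * (1 - s * q ^ n / (omega * r)) * (1 - s * q ^ n * r / omega) \<noteq> 0"
    and "\<And>n. qpoch (omega * s / r) q n * qpoch (s / (omega * r)) q n * X n * \<beta> n = qpoch (s ^ 3 / r ^ 3) (q ^ 3) n * X n * \<beta> n / qpoch (s / r) q n"
    and "qpoch_inf (omega * s / r) q * qpoch_inf (s / (omega * r)) q / (qpoch_inf q q * qpoch_inf (a * q) q)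
         = qpoch_inf (s ^ 3 / r ^ 3) (q ^ 3) / (qpoch_inf q q * qpoch_inf (a * q) q * qpoch_inf (s / r) q)"
    and "\<And>n. N n * Y n * \<alpha> n / ((1 - omega * s * q ^ n / r) * (1 - omega * s * q ^ n * r) * (1 - s * q ^ n / (omega * r)) * (1 - s * q ^ n * r / omega))
         = ((1 - s * q ^ n / r) * (1 - s * q ^ n * r) * N n) * Y n * \<alpha> n / ((1 - s ^ 3 * q ^ (3 * n) / r ^ 3) * (1 - s ^ 3 * q ^ (3 * n) * r ^ 3))"
proof -
  have h1: "1 - s * q ^ n / r \<noteq> 0" for n using h56 by blast
  have h2: "(1 - s ^ 3 * q ^ (3 * n) / r ^ 3) * (1 - s ^ 3 * q ^ (3 * n) * r ^ 3) \<noteq> 0" for n using h56 by blast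
  show "\<forall>n. (1 - omega * s * q ^ n / r) * (1 - omega * s * q ^ n * r) * (1 - s * q ^ n / (omega * r)) * (1 - s * q ^ n * r / omega) \<noteq> 0"
    using Domega(3)[OF h1 h2] by blast
  have Pnz: "\<And>j. 1 - s / r * q ^ j \<noteq> 0" using h1 by (simp add: mult.commute)
  have e1: "omega * s / r = omega * (s / r)" by simp
  have e2: "s / (omega * r) = s / r / omega" by (simp add: mult.commute)
  have e3: "s ^ 3 / r ^ 3 = (s / r) ^ 3" by (simp add: power_divide)
  show "qpoch (omega * s / r) q n * qpoch (s / (omega * r)) q n * X n * \<beta> n = qpoch (s ^ 3 / r ^ 3) (q ^ 3) n * X n * \<beta> n / qpoch (s / r) q n" for n
    unfolding e1 e2 e3 by (rule alg_cube[OF qpoch_nonzero[OF Pnz] qpoch_cube])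
  show "qpoch_inf (omega * s / r) q * qpoch_inf (s / (omega * r)) q / (qpoch_inf q q * qpoch_inf (a * q) q)
         = qpoch_inf (s ^ 3 / r ^ 3) (q ^ 3) / (qpoch_inf q q * qpoch_inf (a * q) q * qpoch_inf (s / r) q)"
    unfolding e1 e2 e3 qpoch_inf_cube[OF q, of "s / r", symmetric]
    using qpoch_inf_nonzero[OF q Pnz] by (simp add: field_simps)
  show "N n * Y n * \<alpha> n / ((1 - omega * s * q ^ n / r) * (1 - omega * s * q ^ n * r) * (1 - s * q ^ n / (omega * r)) * (1 - s * q ^ n * r / omega))
         = ((1 - s * q ^ n / r) * (1 - s * q ^ n * r) * N n) * Y n * \<alpha> n / ((1 - s ^ 3 * q ^ (3 * n) / r ^ 3) * (1 - s ^ 3 * q ^ (3 * n) * r ^ 3))" for n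
    unfolding Domega(1)[OF h1 h2] by (rule alg_div3[OF h2 h1 Domega(2)[OF h1 h2]])
qed


lemma part6:
  fixes a q s r :: complex and \<alpha> \<beta> :: "nat \<Rightarrow> complex"
  assumes q: "norm q < 1" and hq0: "q \<noteq> 0" and hs: "s ^ 2 = a" and hr: "r ^ 2 = q"
    and bp: "bailey_pair \<alpha> \<beta> a q" and anz: "\<forall>j\<ge>1. a * q ^ j \<noteq> 1"
    and h56: "\<forall>n. 1 - s * q ^ n / r \<noteq> 0 \<and> (1 - s ^ 3 * q ^ (3 * n) / r ^ 3) * (1 - s ^ 3 * q ^ (3 * n) * r ^ 3) \<noteq> 0"
    and sumR: "summable (\<lambda>n. (1 - q) * (1 - s * q ^ n / r) * (1 - s * q ^ n * r) * q ^ (2 * n) * \<alpha> n /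
            ((1 - s ^ 3 * q ^ (3 * n) / r ^ 3) * (1 - s ^ 3 * q ^ (3 * n) * r ^ 3)))"
  shows "(\<Sum>n. qpoch (s ^ 3 / r ^ 3) (q ^ 3) n * q ^ (2 * n) * \<beta> n / qpoch (s / r) q n)
         = qpoch_inf (s ^ 3 / r ^ 3) (q ^ 3) / (qpoch_inf q q * qpoch_inf (a * q) q * qpoch_inf (s / r) q) *
           (\<Sum>n. (1 - q) * (1 - s * q ^ n / r) * (1 - s * q ^ n * r) * q ^ (2 * n) * \<alpha> n /
            ((1 - s ^ 3 * q ^ (3 * n) / r ^ 3) * (1 - s ^ 3 * q ^ (3 * n) * r ^ 3)))"
proof -
  note of = omega_facts[OF q hr hq0 h56]
  have f: "(\<lambda>n. (1 - q) * q ^ (2 * n) * \<alpha> n /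
            ((1 - omega * s * q ^ n / r) * (1 - omega * s * q ^ n * r) * (1 - s * q ^ n / (omega * r)) * (1 - s * q ^ n * r / omega)))
        = (\<lambda>n. (1 - q) * (1 - s * q ^ n / r) * (1 - s * q ^ n * r) * q ^ (2 * n) * \<alpha> n /
            ((1 - s ^ 3 * q ^ (3 * n) / r ^ 3) * (1 - s ^ 3 * q ^ (3 * n) * r ^ 3)))"
  proof
    fix n show "(1 - q) * q ^ (2 * n) * \<alpha> n /
            ((1 - omega * s * q ^ n / r) * (1 - omega * s * q ^ n * r) * (1 - s * q ^ n / (omega * r)) * (1 - s * q ^ n * r / omega))
        = (1 - q) * (1 - s * q ^ n / r) * (1 - s * q ^ n * r) * q ^ (2 * n) * \<alpha> n /
            ((1 - s ^ 3 * q ^ (3 * n) / r ^ 3) * (1 - s ^ 3 * q ^ (3 * n) * r ^ 3))"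
      using of(4)[where N="\<lambda>_. 1 - q" and Y="\<lambda>n. q ^ (2 * n)" and \<alpha>=\<alpha> and n=n] by (simp add: mult_ac)
  qed
  have g: "(\<lambda>n. qpoch (omega * s / r) q n * qpoch (s / (omega * r)) q n * q ^ (2 * n) * \<beta> n)
      = (\<lambda>n. qpoch (s ^ 3 / r ^ 3) (q ^ 3) n * q ^ (2 * n) * \<beta> n / qpoch (s / r) q n)"
    using of(2)[where X="\<lambda>n. q ^ (2 * n)" and \<beta>=\<beta>] by simp
  have sumR4: "summable (\<lambda>n. (1 - q) * q ^ (2 * n) * \<alpha> n /
            ((1 - omega * s * q ^ n / r) * (1 - omega * s * q ^ n * r) * (1 - s * q ^ n / (omega * r)) * (1 - s * q ^ n * r / omega)))"
    unfolding f by (rule sumR)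
  from part4[OF q hq0 hs hr bp anz omega_nz of(1) sumR4] show ?thesis unfolding f g of(3) .
qed

lemma part5:
  fixes a q s r :: complex and \<alpha> \<beta> :: "nat \<Rightarrow> complex"
  assumes q: "norm q < 1" and hq0: "q \<noteq> 0" and hs: "s ^ 2 = a" and hr: "r ^ 2 = q"
    and bp: "bailey_pair \<alpha> \<beta> a q" and anz: "\<forall>j\<ge>1. a * q ^ j \<noteq> 1"
    and h56: "\<forall>n. 1 - s * q ^ n / r \<noteq> 0 \<and> (1 - s ^ 3 * q ^ (3 * n) / r ^ 3) * (1 - s ^ 3 * q ^ (3 * n) * r ^ 3) \<noteq> 0"
    and sumR: "summable (\<lambda>n. (1 - s * q ^ n / r) * (1 - s * q ^ n * r) * (1 + s * q ^ n * r + a * q ^ (2 * n)) * q ^ n * \<alpha> n /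
            ((1 - s ^ 3 * q ^ (3 * n) / r ^ 3) * (1 - s ^ 3 * q ^ (3 * n) * r ^ 3)))"
  shows "(\<Sum>n. qpoch (s ^ 3 / r ^ 3) (q ^ 3) n * q ^ n * \<beta> n / qpoch (s / r) q n)
         = qpoch_inf (s ^ 3 / r ^ 3) (q ^ 3) / (qpoch_inf q q * qpoch_inf (a * q) q * qpoch_inf (s / r) q) *
           (\<Sum>n. (1 - s * q ^ n / r) * (1 - s * q ^ n * r) * (1 + s * q ^ n * r + a * q ^ (2 * n)) * q ^ n * \<alpha> n /
            ((1 - s ^ 3 * q ^ (3 * n) / r ^ 3) * (1 - s ^ 3 * q ^ (3 * n) * r ^ 3)))"
proof -
  note of = omega_facts[OF q hr hq0 h56]
  have num: "1 - (omega + 1 / omega) * s * q ^ n * r + a * q ^ (2 * n) = 1 + s * q ^ n * r + a * q ^ (2 * n)" for n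
    unfolding omega_inv by simp
  have f: "(\<lambda>n. (1 - (omega + 1 / omega) * s * q ^ n * r + a * q ^ (2 * n)) * q ^ n * \<alpha> n /
            ((1 - omega * s * q ^ n / r) * (1 - omega * s * q ^ n * r) * (1 - s * q ^ n / (omega * r)) * (1 - s * q ^ n * r / omega)))
        = (\<lambda>n. (1 - s * q ^ n / r) * (1 - s * q ^ n * r) * (1 + s * q ^ n * r + a * q ^ (2 * n)) * q ^ n * \<alpha> n /
            ((1 - s ^ 3 * q ^ (3 * n) / r ^ 3) * (1 - s ^ 3 * q ^ (3 * n) * r ^ 3)))"
  proof
    fix n show "(1 - (omega + 1 / omega) * s * q ^ n * r + a * q ^ (2 * n)) * q ^ n * \<alpha> n /
            ((1 - omega * s * q ^ n / r) * (1 - omega * s * q ^ n * r) * (1 - s * q ^ n / (omega * r)) * (1 - s * q ^ n * r / omega))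
        = (1 - s * q ^ n / r) * (1 - s * q ^ n * r) * (1 + s * q ^ n * r + a * q ^ (2 * n)) * q ^ n * \<alpha> n /
            ((1 - s ^ 3 * q ^ (3 * n) / r ^ 3) * (1 - s ^ 3 * q ^ (3 * n) * r ^ 3))"
      unfolding num by (rule of(4)[where N="\<lambda>n. 1 + s * q ^ n * r + a * q ^ (2 * n)" and Y="\<lambda>n. q ^ n" and \<alpha>=\<alpha> and n=n])
  qed
  have g: "(\<lambda>n. qpoch (omega * s / r) q n * qpoch (s / (omega * r)) q n * q ^ n * \<beta> n)
      = (\<lambda>n. qpoch (s ^ 3 / r ^ 3) (q ^ 3) n * q ^ n * \<beta> n / qpoch (s / r) q n)"
    using of(2)[where X="\<lambda>n. q ^ n" and \<beta>=\<beta>] by simp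
  have sumR3: "summable (\<lambda>n. (1 - (omega + 1 / omega) * s * q ^ n * r + a * q ^ (2 * n)) * q ^ n * \<alpha> n /
            ((1 - omega * s * q ^ n / r) * (1 - omega * s * q ^ n * r) * (1 - s * q ^ n / (omega * r)) * (1 - s * q ^ n * r / omega)))"
    unfolding f by (rule sumR)
  from part3[OF q hq0 hs hr bp anz omega_nz of(1) sumR3] show ?thesis unfolding f g of(3) .
qed


theorem lemma3p2:
  fixes a q s r :: complex and \<alpha> \<beta> :: "nat \<Rightarrow> complex"
  assumes hq: "norm q < 1" and hq0: "q \<noteq> 0"
    and hs: "s ^ 2 = a" and hr: "r ^ 2 = q"
  shows
  "(bailey_pair \<alpha> \<beta> a q \<and> (\<forall>j\<ge>1. a * q ^ j \<noteq> 1) \<longrightarrow>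
     ((\<forall>n. 1 - s * q ^ n \<noteq> 0) \<longrightarrow>
       summable (\<lambda>n. qpoch s q n * (-1) ^ n * s ^ n * q ^ (n * (n + 1) div 2) * \<beta> n) \<longrightarrow>
       summable (\<lambda>n. (1 - s) * (-1) ^ n * s ^ n * q ^ (n * (n + 1) div 2) * \<alpha> n / (1 - s * q ^ n)) \<longrightarrow>
       (\<Sum>n. qpoch s q n * (-1) ^ n * s ^ n * q ^ (n * (n + 1) div 2) * \<beta> n)
         = qpoch_inf (s * q) q / qpoch_inf (a * q) q *
           (\<Sum>n. (1 - s) * (-1) ^ n * s ^ n * q ^ (n * (n + 1) div 2) * \<alpha> n / (1 - s * q ^ n)))
   \<and> (summable (\<lambda>n. qpoch (s * r) q n * (-1) ^ n * s ^ n * r ^ (n\<^sup>2) * \<beta> n) \<longrightarrow>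
       summable (\<lambda>n. (-1) ^ n * s ^ n * r ^ (n\<^sup>2) * \<alpha> n) \<longrightarrow>
       (\<Sum>n. qpoch (s * r) q n * (-1) ^ n * s ^ n * r ^ (n\<^sup>2) * \<beta> n)
         = qpoch_inf (s * r) q / qpoch_inf (a * q) q *
           (\<Sum>n. (-1) ^ n * s ^ n * r ^ (n\<^sup>2) * \<alpha> n))
   \<and> (\<forall>z. z \<noteq> 0 \<longrightarrow>
       (\<forall>n. (1 - z * s * q ^ n / r) * (1 - z * s * q ^ n * r) * (1 - s * q ^ n / (z * r)) * (1 - s * q ^ n * r / z) \<noteq> 0) \<longrightarrow>
       summable (\<lambda>n. qpoch (z * s / r) q n * qpoch (s / (z * r)) q n * q ^ n * \<beta> n) \<longrightarrow>
       summable (\<lambda>n. (1 - (z + 1 / z) * s * q ^ n * r + a * q ^ (2 * n)) * q ^ n * \<alpha> n /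
            ((1 - z * s * q ^ n / r) * (1 - z * s * q ^ n * r) * (1 - s * q ^ n / (z * r)) * (1 - s * q ^ n * r / z))) \<longrightarrow>
       (\<Sum>n. qpoch (z * s / r) q n * qpoch (s / (z * r)) q n * q ^ n * \<beta> n)
         = qpoch_inf (z * s / r) q * qpoch_inf (s / (z * r)) q / (qpoch_inf q q * qpoch_inf (a * q) q) *
           (\<Sum>n. (1 - (z + 1 / z) * s * q ^ n * r + a * q ^ (2 * n)) * q ^ n * \<alpha> n /
            ((1 - z * s * q ^ n / r) * (1 - z * s * q ^ n * r) * (1 - s * q ^ n / (z * r)) * (1 - s * q ^ n * r / z))))
   \<and> (\<forall>z. z \<noteq> 0 \<longrightarrow>
       (\<forall>n. (1 - z * s * q ^ n / r) * (1 - z * s * q ^ n * r) * (1 - s * q ^ n / (z * r)) * (1 - s * q ^ n * r / z) \<noteq> 0) \<longrightarrow>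
       summable (\<lambda>n. qpoch (z * s / r) q n * qpoch (s / (z * r)) q n * q ^ (2 * n) * \<beta> n) \<longrightarrow>
       summable (\<lambda>n. (1 - q) * q ^ (2 * n) * \<alpha> n /
            ((1 - z * s * q ^ n / r) * (1 - z * s * q ^ n * r) * (1 - s * q ^ n / (z * r)) * (1 - s * q ^ n * r / z))) \<longrightarrow>
       (\<Sum>n. qpoch (z * s / r) q n * qpoch (s / (z * r)) q n * q ^ (2 * n) * \<beta> n)
         = qpoch_inf (z * s / r) q * qpoch_inf (s / (z * r)) q / (qpoch_inf q q * qpoch_inf (a * q) q) *
           (\<Sum>n. (1 - q) * q ^ (2 * n) * \<alpha> n /
            ((1 - z * s * q ^ n / r) * (1 - z * s * q ^ n * r) * (1 - s * q ^ n / (z * r)) * (1 - s * q ^ n * r / z))))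
   \<and> ((\<forall>n. 1 - s * q ^ n / r \<noteq> 0 \<and> (1 - s ^ 3 * q ^ (3 * n) / r ^ 3) * (1 - s ^ 3 * q ^ (3 * n) * r ^ 3) \<noteq> 0) \<longrightarrow>
       summable (\<lambda>n. qpoch (s ^ 3 / r ^ 3) (q ^ 3) n * q ^ n * \<beta> n / qpoch (s / r) q n) \<longrightarrow>
       summable (\<lambda>n. (1 - s * q ^ n / r) * (1 - s * q ^ n * r) * (1 + s * q ^ n * r + a * q ^ (2 * n)) * q ^ n * \<alpha> n /
            ((1 - s ^ 3 * q ^ (3 * n) / r ^ 3) * (1 - s ^ 3 * q ^ (3 * n) * r ^ 3))) \<longrightarrow>
       (\<Sum>n. qpoch (s ^ 3 / r ^ 3) (q ^ 3) n * q ^ n * \<beta> n / qpoch (s / r) q n)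
         = qpoch_inf (s ^ 3 / r ^ 3) (q ^ 3) / (qpoch_inf q q * qpoch_inf (a * q) q * qpoch_inf (s / r) q) *
           (\<Sum>n. (1 - s * q ^ n / r) * (1 - s * q ^ n * r) * (1 + s * q ^ n * r + a * q ^ (2 * n)) * q ^ n * \<alpha> n /
            ((1 - s ^ 3 * q ^ (3 * n) / r ^ 3) * (1 - s ^ 3 * q ^ (3 * n) * r ^ 3))))
   \<and> ((\<forall>n. 1 - s * q ^ n / r \<noteq> 0 \<and> (1 - s ^ 3 * q ^ (3 * n) / r ^ 3) * (1 - s ^ 3 * q ^ (3 * n) * r ^ 3) \<noteq> 0) \<longrightarrow>
       summable (\<lambda>n. qpoch (s ^ 3 / r ^ 3) (q ^ 3) n * q ^ (2 * n) * \<beta> n / qpoch (s / r) q n) \<longrightarrow>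
       summable (\<lambda>n. (1 - q) * (1 - s * q ^ n / r) * (1 - s * q ^ n * r) * q ^ (2 * n) * \<alpha> n /
            ((1 - s ^ 3 * q ^ (3 * n) / r ^ 3) * (1 - s ^ 3 * q ^ (3 * n) * r ^ 3))) \<longrightarrow>
       (\<Sum>n. qpoch (s ^ 3 / r ^ 3) (q ^ 3) n * q ^ (2 * n) * \<beta> n / qpoch (s / r) q n)
         = qpoch_inf (s ^ 3 / r ^ 3) (q ^ 3) / (qpoch_inf q q * qpoch_inf (a * q) q * qpoch_inf (s / r) q) *
           (\<Sum>n. (1 - q) * (1 - s * q ^ n / r) * (1 - s * q ^ n * r) * q ^ (2 * n) * \<alpha> n /
            ((1 - s ^ 3 * q ^ (3 * n) / r ^ 3) * (1 - s ^ 3 * q ^ (3 * n) * r ^ 3)))))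
   \<and> (bailey_pair \<alpha> \<beta> a (q ^ 2) \<and> (\<forall>j\<ge>1. a * q ^ (2 * j) \<noteq> 1) \<longrightarrow>
     (\<forall>n. 1 + s * q ^ (2 * n) \<noteq> 0) \<longrightarrow>
     summable (\<lambda>n. qpoch (- s) q (2 * n) * q ^ n * \<beta> n) \<longrightarrow>
     summable (\<lambda>n. (1 + s) * q ^ n * \<alpha> n / (1 + s * q ^ (2 * n))) \<longrightarrow>
     (\<Sum>n. qpoch (- s) q (2 * n) * q ^ n * \<beta> n)
       = qpoch_inf (- s * q) q / (qpoch_inf (a * q ^ 2) (q ^ 2) * qpoch_inf q (q ^ 2)) *
         (\<Sum>n. (1 + s) * q ^ n * \<alpha> n / (1 + s * q ^ (2 * n))))"
  apply (rule conjI)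
   apply (rule impI, elim conjE)
   apply (intro conjI)
        apply (intro impI, rule part1[OF hq hs], assumption+)
       apply (intro impI, rule part2[OF hq hs hr], assumption+)
      apply (intro allI impI, rule part3[OF hq hq0 hs hr], assumption+)
     apply (intro allI impI, rule part4[OF hq hq0 hs hr], assumption+)
    apply (intro impI, rule part5[OF hq hq0 hs hr], assumption+)
   apply (intro impI, rule part6[OF hq hq0 hs hr], assumption+)
  apply (intro impI, elim conjE, rule part7[OF hq hq0 hs], assumption+)
  done


end
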